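(* Let $p,q$ be distinct prime numbers and let $G=\langle a,s,t \mid sas^{-1}=a^p,\ tat^{-1}=a^q\rangle$. Then the following subsets are equationally definable in $G$: (1) $\mathrm{Mon}\langle s\rangle$ and $\mathrm{Mon}\langle t\rangle$; (2) $\{(g,t^i) \mid i\in\mathbb{Z}_{\geq 0},\ g\in \mathrm{Mon}\langle st^i\rangle\}\subseteq G^2$. Moreover, let $E\subseteq G^n$ be equationally definable and let $k\neq l$ be two coordinates such that for every $e=(e_1,\dots,e_n)\in E$ we have $e_k,e_l\in\mathrm{Mon}\langle s,t\rangle$. Then each of the following sets is equationally definable in $G$: (3) $\{e\in E \mid \mathrm{expsum}_s(e_k)=\mathrm{expsum}_t(e_l)\}$; (4) $\{e\in E \mid \mathrm{expsum}_s(e_k)=\mathrm{expsum}_s(e_l)\}$; (5) $\{e\in E \mid \mathrm{expsum}_t(e_k)=\mathrm{expsum}_t(e_l)\}$.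
   Context: For a subset $X$ of a group, $\mathrm{Mon}\langle X\rangle$ denotes the submonoid generated by $X$. For $x\in\{s,t\}$, $\mathrm{expsum}_x(g)$ is the exponent sum of $x$ in any word representing $g$ (well defined on $G$, since it is the image of $g$ under the homomorphism $G\to\mathbb{Z}$ sending $x\mapsto 1$ and the other two generators to $0$). An equation over a finitely generated group $G$ with variables from a finite set $\mathcal X$ is an element $w\in G*F(\mathcal X)$, written $w=1$; a solution is a homomorphism $\phi:G*F(\mathcal X)\to G$ that is the identity on $G$ with $\phi(w)=1$; a system of equations is a finite set of equations in the same variables, solved by a common solution. A set $D\subseteq G^n$ is equationally definable if there is a system of equations $\mathcal E$ over $G$ and variables $X_1,\dots,X_n$ of $\mathcal E$ (not necessarily all variables) such that $D=\{(\phi(X_1),\dots,\phi(X_n)) \mid \phi \text{ a solution of } \mathcal E\}$. *)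

theory Defs
  imports "HOL-Algebra.Group" "HOL-Computational_Algebra.Primes"
begin

datatype gen = A | S | T

text \<open>A word in the free group on a, s, t: letters (x, True) = x, (x, False) = x^-1.\<close>
type_synonym word = "(gen \<times> bool) list"

definition relators :: "nat \<Rightarrow> nat \<Rightarrow> word set" where
  "relators p q =
     {[(S, True), (A, True), (S, False)] @ replicate p (A, False),
      [(T, True), (A, True), (T, False)] @ replicate q (A, False)}"

definition red_step :: "nat \<Rightarrow> nat \<Rightarrow> word \<Rightarrow> word \<Rightarrow> bool" where
  "red_step p q u v \<longleftrightarrow>
     (\<exists>x y r. u = x @ r @ y \<and> v = x @ y \<and>
        (r \<in> relators p q \<or> (\<exists>g b. r = [(g, b), (g, \<not> b)])))"

definition weq :: "nat \<Rightarrow> nat \<Rightarrow> word \<Rightarrow> word \<Rightarrow> bool" where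
  "weq p q = equivclp (red_step p q)"

definition cls :: "nat \<Rightarrow> nat \<Rightarrow> word \<Rightarrow> word set" where
  "cls p q w = {v. weq p q w v}"

definition Gpres :: "nat \<Rightarrow> nat \<Rightarrow> word set monoid" where
  "Gpres p q = \<lparr> carrier = range (cls p q),
                 monoid.mult = (\<lambda>X Y. \<Union>x\<in>X. \<Union>y\<in>Y. cls p q (x @ y)),
                 one = cls p q [] \<rparr>"

definition ga :: "nat \<Rightarrow> nat \<Rightarrow> word set" where "ga p q = cls p q [(A, True)]"
definition gs :: "nat \<Rightarrow> nat \<Rightarrow> word set" where "gs p q = cls p q [(S, True)]"
definition gt :: "nat \<Rightarrow> nat \<Rightarrow> word set" where "gt p q = cls p q [(T, True)]"

inductive_set mon_gen :: "('a, 'b) monoid_scheme \<Rightarrow> 'a set \<Rightarrow> 'a set"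
  for G and X where
    one: "\<one>\<^bsub>G\<^esub> \<in> mon_gen G X"
  | gen: "x \<in> X \<Longrightarrow> x \<in> mon_gen G X"
  | mult: "x \<in> mon_gen G X \<Longrightarrow> y \<in> mon_gen G X \<Longrightarrow> x \<otimes>\<^bsub>G\<^esub> y \<in> mon_gen G X"

definition expsum_word :: "gen \<Rightarrow> word \<Rightarrow> int" where
  "expsum_word x w = (\<Sum>l\<leftarrow>w. if fst l = x then (if snd l then 1 else -1) else 0)"

text \<open>Exponent sum of x in any word representing g (well defined for x = S, T).\<close>
definition expsum :: "gen \<Rightarrow> word set \<Rightarrow> int" where
  "expsum x g = expsum_word x (SOME w. w \<in> g)"

text \<open>An element of G * F(X): a word in constants from G and variables (and their inverses).\<close>
datatype 'v eqletter = Cst "word set" | Var 'v | InvVar 'v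

type_synonym 'v equation = "'v eqletter list"

text \<open>Image of a letter under the homomorphism G * F(X) -> G that is the identity on G
  and sends each variable v to phi v.\<close>
fun eval_letter :: "nat \<Rightarrow> nat \<Rightarrow> ('v \<Rightarrow> word set) \<Rightarrow> 'v eqletter \<Rightarrow> word set" where
  "eval_letter p q \<phi> (Cst g) = g"
| "eval_letter p q \<phi> (Var v) = \<phi> v"
| "eval_letter p q \<phi> (InvVar v) = inv\<^bsub>Gpres p q\<^esub> (\<phi> v)"

definition eval_eq :: "nat \<Rightarrow> nat \<Rightarrow> ('v \<Rightarrow> word set) \<Rightarrow> 'v equation \<Rightarrow> word set" where
  "eval_eq p q \<phi> w = foldr (\<lambda>l acc. eval_letter p q \<phi> l \<otimes>\<^bsub>Gpres p q\<^esub> acc) w \<one>\<^bsub>Gpres p q\<^esub>"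

definition consts_ok :: "nat \<Rightarrow> nat \<Rightarrow> 'v equation \<Rightarrow> bool" where
  "consts_ok p q w \<longleftrightarrow> (\<forall>g. Cst g \<in> set w \<longrightarrow> g \<in> carrier (Gpres p q))"

text \<open>A system of equations (finite list), solved by an assignment phi of the variables
  into G.  Tuples in G^n are lists of length n.\<close>
definition solves :: "nat \<Rightarrow> nat \<Rightarrow> ('v \<Rightarrow> word set) \<Rightarrow> 'v equation list \<Rightarrow> bool" where
  "solves p q \<phi> E \<longleftrightarrow> (\<forall>v. \<phi> v \<in> carrier (Gpres p q)) \<and>
                       (\<forall>e\<in>set E. eval_eq p q \<phi> e = \<one>\<^bsub>Gpres p q\<^esub>)"

definition eq_definable :: "nat \<Rightarrow> nat \<Rightarrow> nat \<Rightarrow> word set list set \<Rightarrow> bool" where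
  "eq_definable p q n D \<longleftrightarrow>
     (\<exists>(E :: nat equation list) (xs :: nat list).
        (\<forall>e\<in>set E. consts_ok p q e) \<and> length xs = n \<and>
        D = {map \<phi> xs | \<phi>. solves p q \<phi> E})"

end

theory Submission
  imports Defs
begin

lemma red_step_ctx:
  assumes "red_step p q u v" shows "red_step p q (w @ u @ z) (w @ v @ z)"
proof -
  from assms obtain x y r where "u = x @ r @ y" "v = x @ y"
    "r \<in> relators p q \<or> (\<exists>g b. r = [(g, b), (g, \<not> b)])"
    unfolding red_step_def by blast
  then show ?thesis unfolding red_step_def
    by (rule_tac x="w @ x" in exI, rule_tac x="y @ z" in exI, rule_tac x=r in exI) auto
qed

lemma weq_ctx:
  assumes "weq p q u v" shows "weq p q (w @ u @ z) (w @ v @ z)"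
  using assms unfolding weq_def
proof (induction rule: equivclp_induct)
  case base
  then show ?case by simp
next
  case (step y z')
  then show ?case
    by (meson equivclp_into_equivclp red_step_ctx)
qed

lemma weq_refl [simp]: "weq p q u u"
  by (simp add: weq_def)

lemma weq_sym: "weq p q u v \<Longrightarrow> weq p q v u"
  by (simp add: weq_def equivclp_sym)

lemma weq_trans: "weq p q u v \<Longrightarrow> weq p q v w \<Longrightarrow> weq p q u w"
  unfolding weq_def by (rule equivclp_trans)

lemma weq_app:
  assumes "weq p q u u'" "weq p q v v'" shows "weq p q (u @ v) (u' @ v')"
proof -
  have "weq p q ([] @ u @ v) ([] @ u' @ v)" by (rule weq_ctx[OF assms(1)])
  moreover have "weq p q (u' @ v @ []) (u' @ v' @ [])" by (rule weq_ctx[OF assms(2)])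
  ultimately show ?thesis by (metis append_Nil append_Nil2 weq_trans)
qed

lemma red_weq: "red_step p q u v \<Longrightarrow> weq p q u v"
  by (simp add: weq_def r_into_equivclp)

lemma in_cls_self [simp]: "u \<in> cls p q u"
  by (simp add: cls_def)

lemma cls_eq_iff: "cls p q u = cls p q v \<longleftrightarrow> weq p q u v"
proof
  assume "cls p q u = cls p q v"
  then have "v \<in> cls p q u" by (metis in_cls_self)
  then show "weq p q u v" by (simp add: cls_def)
next
  assume h: "weq p q u v"
  have "\<And>x. weq p q u x \<longleftrightarrow> weq p q v x"
  proof -
    fix x
    have "weq p q u x \<Longrightarrow> weq p q v x" using weq_trans[OF weq_sym[OF h]] .
    moreover have "weq p q v x \<Longrightarrow> weq p q u x" using weq_trans[OF h] .
    ultimately show "weq p q u x \<longleftrightarrow> weq p q v x" by blast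
  qed
  then show "cls p q u = cls p q v" by (simp add: cls_def)
qed


lemma mult_cls: "cls p q u \<otimes>\<^bsub>Gpres p q\<^esub> cls p q v = cls p q (u @ v)"
proof -
  have *: "\<And>x y. x \<in> cls p q u \<Longrightarrow> y \<in> cls p q v \<Longrightarrow> cls p q (x @ y) = cls p q (u @ v)"
  proof -
    fix x y assume "x \<in> cls p q u" "y \<in> cls p q v"
    then have "weq p q u x" "weq p q v y" by (simp_all add: cls_def)
    then have "weq p q (x @ y) (u @ v)" by (rule weq_app[OF weq_sym weq_sym])
    then show "cls p q (x @ y) = cls p q (u @ v)" by (simp only: cls_eq_iff)
  qed
  have m: "cls p q u \<otimes>\<^bsub>Gpres p q\<^esub> cls p q v = (\<Union>x\<in>cls p q u. \<Union>y\<in>cls p q v. cls p q (x @ y))"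
    by (simp add: Gpres_def)
  show ?thesis unfolding m
  proof
    show "(\<Union>x\<in>cls p q u. \<Union>y\<in>cls p q v. cls p q (x @ y)) \<subseteq> cls p q (u @ v)"
      using * by blast
    show "cls p q (u @ v) \<subseteq> (\<Union>x\<in>cls p q u. \<Union>y\<in>cls p q v. cls p q (x @ y))"
      using in_cls_self[of u p q] in_cls_self[of v p q] by blast
  qed
qed

lemma one_cls: "\<one>\<^bsub>Gpres p q\<^esub> = cls p q []"
  by (simp add: Gpres_def)

lemma carrier_Gpres: "carrier (Gpres p q) = range (cls p q)"
  by (simp add: Gpres_def)

lemma cls_carrier [simp]: "cls p q u \<in> carrier (Gpres p q)"
  by (simp add: Gpres_def)

fun invl :: "gen \<times> bool \<Rightarrow> gen \<times> bool" where "invl (g, b) = (g, \<not> b)"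

definition winv :: "word \<Rightarrow> word" where "winv w = rev (map invl w)"

lemma winv_Nil [simp]: "winv [] = []" by (simp add: winv_def)
lemma winv_Cons [simp]: "winv (x # w) = winv w @ [invl x]" by (simp add: winv_def)
lemma winv_append [simp]: "winv (u @ v) = winv v @ winv u" by (simp add: winv_def)

lemma weq_cancel_pair: "weq p q [(g, b), (g, \<not> b)] []"
  by (rule red_weq) (unfold red_step_def, rule exI[of _ "[]"], rule exI[of _ "[]"], auto)

lemma weq_winv_l: "weq p q (winv w @ w) []"
proof (induction w)
  case Nil
  then show ?case by simp
next
  case (Cons x w)
  obtain g b where x: "x = (g, b)" by (cases x)
  have "weq p q (winv w @ [(g, \<not> b), (g, b)] @ w) (winv w @ [] @ w)"
    using weq_cancel_pair[of p q g "\<not> b"] by (intro weq_ctx) simp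
  then have "weq p q (winv (x # w) @ x # w) (winv w @ w)" using x by simp
  then show ?case using Cons.IH by (rule weq_trans)
qed

lemma gpres_group: "group (Gpres p q)"
proof (rule groupI)
  fix x y assume "x \<in> carrier (Gpres p q)" "y \<in> carrier (Gpres p q)"
  then show "x \<otimes>\<^bsub>Gpres p q\<^esub> y \<in> carrier (Gpres p q)"
    by (auto simp: carrier_Gpres mult_cls)
next
  show "\<one>\<^bsub>Gpres p q\<^esub> \<in> carrier (Gpres p q)" by (simp add: one_cls)
next
  fix x y z assume "x \<in> carrier (Gpres p q)" "y \<in> carrier (Gpres p q)" "z \<in> carrier (Gpres p q)"
  then show "x \<otimes>\<^bsub>Gpres p q\<^esub> y \<otimes>\<^bsub>Gpres p q\<^esub> z = x \<otimes>\<^bsub>Gpres p q\<^esub> (y \<otimes>\<^bsub>Gpres p q\<^esub> z)"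
    by (auto simp: carrier_Gpres mult_cls)
next
  fix x assume "x \<in> carrier (Gpres p q)"
  then show "\<one>\<^bsub>Gpres p q\<^esub> \<otimes>\<^bsub>Gpres p q\<^esub> x = x"
    by (auto simp: carrier_Gpres mult_cls one_cls)
next
  fix x assume "x \<in> carrier (Gpres p q)"
  then obtain w where "x = cls p q w" by (auto simp: carrier_Gpres)
  then show "\<exists>y\<in>carrier (Gpres p q). y \<otimes>\<^bsub>Gpres p q\<^esub> x = \<one>\<^bsub>Gpres p q\<^esub>"
    by (intro bexI[of _ "cls p q (winv w)"]) (auto simp: mult_cls one_cls cls_eq_iff weq_winv_l)
qed

lemma inv_cls: "inv\<^bsub>Gpres p q\<^esub> (cls p q w) = cls p q (winv w)"
proof -
  interpret group "Gpres p q" by (rule gpres_group)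
  show ?thesis
    by (rule inv_equality) (auto simp: mult_cls one_cls cls_eq_iff weq_winv_l)
qed

lemma relator_one:
  assumes "r \<in> relators p q" shows "cls p q r = \<one>\<^bsub>Gpres p q\<^esub>"
proof -
  have "red_step p q r []" unfolding red_step_def
    by (rule exI[of _ "[]"], rule exI[of _ "[]"], rule exI[of _ r]) (simp add: assms)
  then show ?thesis by (simp add: one_cls cls_eq_iff red_weq)
qed


type_synonym item = "gen \<times> bool \<times> int"

definition ee :: "nat \<Rightarrow> nat \<Rightarrow> gen \<Rightarrow> int" where
  "ee p q Z = (if Z = S then int p else int q)"

fun okpair :: "item \<Rightarrow> item \<Rightarrow> bool" where
  "okpair (Z1, b1, c1) (Z2, b2, c2) \<longleftrightarrow>
     \<not> (Z1 = Z2 \<and> b1 \<and> \<not> b2) \<and> \<not> (Z1 = Z2 \<and> \<not> b1 \<and> c1 = 0 \<and> b2)"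

fun okitem :: "nat \<Rightarrow> nat \<Rightarrow> item \<Rightarrow> bool" where
  "okitem p q (Z, b, c) \<longleftrightarrow> Z \<noteq> A \<and> (b \<longrightarrow> c = 0) \<and> (\<not> b \<longrightarrow> 0 \<le> c \<and> c < ee p q Z)"

fun okchain :: "item list \<Rightarrow> bool" where
  "okchain (x # y # L) \<longleftrightarrow> okpair x y \<and> okchain (y # L)"
| "okchain _ \<longleftrightarrow> True"

definition valid :: "nat \<Rightarrow> nat \<Rightarrow> item list \<Rightarrow> bool" where
  "valid p q L \<longleftrightarrow> (\<forall>x\<in>set L. okitem p q x) \<and> okchain L"

lemma valid_Nil [simp]: "valid p q []"
  by (simp add: valid_def)

lemma valid_Cons:
  "valid p q (x # L) \<longleftrightarrow> okitem p q x \<and> valid p q L \<and> (L = [] \<or> okpair x (hd L))"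
  by (cases L) (auto simp: valid_def)

lemma valid_Cons_Cons:
  "valid p q (x # y # L) \<longleftrightarrow> okitem p q x \<and> okpair x y \<and> valid p q (y # L)"
  by (auto simp: valid_def)

lemma valid_single [simp]: "valid p q [x] \<longleftrightarrow> okitem p q x"
  by (simp add: valid_def)

definition pos_act :: "nat \<Rightarrow> nat \<Rightarrow> gen \<Rightarrow> int \<times> item list \<Rightarrow> int \<times> item list" where
  "pos_act p q Z x = (case x of (k, L) \<Rightarrow>
     (case L of [] \<Rightarrow> (ee p q Z * k, [(Z, True, 0)])
      | (Z', b', c') # L' \<Rightarrow> if Z' = Z \<and> \<not> b' then (ee p q Z * k + c', L')
                          else (ee p q Z * k, (Z, True, 0) # L)))"

definition neg_act :: "nat \<Rightarrow> nat \<Rightarrow> gen \<Rightarrow> int \<times> item list \<Rightarrow> int \<times> item list" where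
  "neg_act p q Z x = (case x of (k, L) \<Rightarrow>
     (case L of [] \<Rightarrow> (k div ee p q Z, [(Z, False, k mod ee p q Z)])
      | (Z', b', c') # L' \<Rightarrow> if Z' = Z \<and> b' \<and> k mod ee p q Z = 0 then (k div ee p q Z, L')
                          else (k div ee p q Z, (Z, False, k mod ee p q Z) # L)))"

lemma pos_act_Nil [simp]: "pos_act p q Z (k, []) = (ee p q Z * k, [(Z, True, 0)])"
  by (simp add: pos_act_def)

lemma pos_act_Cons [simp]: "pos_act p q Z (k, (Z', b', c') # L') =
  (if Z' = Z \<and> \<not> b' then (ee p q Z * k + c', L') else (ee p q Z * k, (Z, True, 0) # (Z', b', c') # L'))"
  by (simp add: pos_act_def)

lemma neg_act_Nil [simp]: "neg_act p q Z (k, []) = (k div ee p q Z, [(Z, False, k mod ee p q Z)])"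
  by (simp add: neg_act_def)

lemma neg_act_Cons [simp]: "neg_act p q Z (k, (Z', b', c') # L') =
  (if Z' = Z \<and> b' \<and> k mod ee p q Z = 0 then (k div ee p q Z, L')
   else (k div ee p q Z, (Z, False, k mod ee p q Z) # (Z', b', c') # L'))"
  by (simp add: neg_act_def)

fun act :: "nat \<Rightarrow> nat \<Rightarrow> gen \<times> bool \<Rightarrow> int \<times> item list \<Rightarrow> int \<times> item list" where
  "act p q (g, b) (k, L) =
    (if g = A then (if b then (k + 1, L) else (k - 1, L))
     else if b then pos_act p q g (k, L) else neg_act p q g (k, L))"

lemma act_eq:
  "act p q (g, b) x =
    (if g = A then (if b then (fst x + 1, snd x) else (fst x - 1, snd x))
     else if b then pos_act p q g x else neg_act p q g x)"
  by (cases x) simp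

declare act.simps [simp del]
declare act_eq [simp]

definition act_word :: "nat \<Rightarrow> nat \<Rightarrow> word \<Rightarrow> int \<times> item list \<Rightarrow> int \<times> item list" where
  "act_word p q w x = foldr (act p q) w x"

lemma act_word_Nil [simp]: "act_word p q [] x = x"
  by (simp add: act_word_def)

lemma act_word_Cons [simp]: "act_word p q (l # w) x = act p q l (act_word p q w x)"
  by (simp add: act_word_def)

lemma act_word_append [simp]: "act_word p q (u @ v) x = act_word p q u (act_word p q v x)"
  by (simp add: act_word_def)

locale primes2 =
  fixes p q :: nat
  assumes p2: "p \<ge> 2" and q2: "q \<ge> 2"
begin

lemma ee_pos: "ee p q Z > 0"
  using p2 q2 by (simp add: ee_def)

lemma ee_ge2: "ee p q Z \<ge> 2"
  using p2 q2 by (simp add: ee_def)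

lemma valid_pos_act:
  assumes "valid p q L" "Z \<noteq> A"
  shows "valid p q (snd (pos_act p q Z (k, L)))"
proof (cases L)
  case Nil
  then show ?thesis using assms by simp
next
  case (Cons y L')
  obtain Z' b' c' where y: "y = (Z', b', c')" by (cases y)
  show ?thesis using assms Cons y by (auto simp: valid_Cons)
qed

lemma valid_neg_act:
  assumes "valid p q L" "Z \<noteq> A"
  shows "valid p q (snd (neg_act p q Z (k, L)))"
proof (cases L)
  case Nil
  then show ?thesis using assms ee_pos[of Z] by simp
next
  case (Cons y L')
  obtain Z' b' c' where y: "y = (Z', b', c')" by (cases y)
  show ?thesis using assms Cons y ee_pos[of Z] by (auto simp: valid_Cons)
qed

lemma valid_act:
  assumes "valid p q (snd x)"
  shows "valid p q (snd (act p q l x))"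
  using assms valid_pos_act valid_neg_act
  by (cases x; cases l) auto

lemma valid_act_word:
  assumes "valid p q (snd x)"
  shows "valid p q (snd (act_word p q w x))"
  using assms by (induction w) (auto intro: valid_act)

lemma neg_pos:
  assumes "valid p q L" "Z \<noteq> A"
  shows "neg_act p q Z (pos_act p q Z (k, L)) = (k, L)"
proof (cases L)
  case Nil
  then show ?thesis using ee_pos[of Z] by simp
next
  case (Cons y L')
  obtain Z' b' c' where y: "y = (Z', b', c')" by (cases y)
  show ?thesis
  proof (cases "Z' = Z \<and> \<not> b'")
    case True
    then have c: "0 \<le> c'" "c' < ee p q Z" using assms Cons y by (auto simp: valid_Cons)
    have d: "(ee p q Z * k + c') div ee p q Z = k" "(ee p q Z * k + c') mod ee p q Z = c'"
      using c ee_pos[of Z] by (simp_all add: div_pos_pos_trivial mod_pos_pos_trivial)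
    show ?thesis
    proof (cases L')
      case Nil
      then show ?thesis using True Cons y d by simp
    next
      case (Cons y2 L'')
      obtain Z2 b2 c2 where y2: "y2 = (Z2, b2, c2)" by (cases y2)
      have "\<not> (Z2 = Z \<and> b2 \<and> c' = 0)"
        using assms(1) \<open>L = y # L'\<close> Cons y y2 True by (auto simp: valid_Cons_Cons)
      then show ?thesis using True \<open>L = y # L'\<close> Cons y y2 d by auto
    qed
  next
    case False
    then show ?thesis using Cons y ee_pos[of Z] by auto
  qed
qed

lemma pos_neg:
  assumes "valid p q L" "Z \<noteq> A"
  shows "pos_act p q Z (neg_act p q Z (k, L)) = (k, L)"
proof (cases L)
  case Nil
  then show ?thesis using ee_pos[of Z] by simp
next
  case (Cons y L')
  obtain Z' b' c' where y: "y = (Z', b', c')" by (cases y)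
  show ?thesis
  proof (cases "Z' = Z \<and> b' \<and> k mod ee p q Z = 0")
    case True
    then have c: "c' = 0" using assms Cons y by (auto simp: valid_Cons)
    have k: "ee p q Z * (k div ee p q Z) = k" using True by auto
    show ?thesis
    proof (cases L')
      case Nil
      then show ?thesis using True Cons y c k by simp
    next
      case (Cons y2 L'')
      obtain Z2 b2 c2 where y2: "y2 = (Z2, b2, c2)" by (cases y2)
      have "\<not> (Z2 = Z \<and> \<not> b2)"
        using assms(1) \<open>L = y # L'\<close> Cons y y2 True by (auto simp: valid_Cons_Cons)
      then show ?thesis using True \<open>L = y # L'\<close> Cons y y2 c k by auto
    qed
  next
    case False
    then show ?thesis using Cons y ee_pos[of Z] by auto
  qed
qed

lemma act_inv_pair:
  assumes "valid p q (snd x)"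
  shows "act p q (g, \<not> b) (act p q (g, b) x) = x"
  using assms neg_pos pos_neg by (cases x) auto

lemma act_rep_A [simp]:
  "act_word p q (replicate n (A, True)) (k, L) = (k + int n, L)"
  "act_word p q (replicate n (A, False)) (k, L) = (k - int n, L)"
  by (induction n) auto

lemma neg_act_shift:
  "neg_act p q Z (k - ee p q Z, L) = (fst (neg_act p q Z (k, L)) - 1, snd (neg_act p q Z (k, L)))"
proof -
  have e: "ee p q Z > 0" by (rule ee_pos)
  have "k div ee p q Z = (k - ee p q Z) div ee p q Z + 1" "(k - ee p q Z) mod ee p q Z = k mod ee p q Z"
    using e div_add_self2[of "ee p q Z" "k - ee p q Z"] mod_add_self2[of "k - ee p q Z" "ee p q Z"]
    by simp_all
  then have "(k - ee p q Z) div ee p q Z = k div ee p q Z - 1" "(k - ee p q Z) mod ee p q Z = k mod ee p q Z"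
    by simp_all
  then show ?thesis
    by (cases L) (auto simp: neg_act_def split: prod.splits list.splits)
qed

lemma act_relator:
  assumes "valid p q L" "Z \<noteq> A"
  shows "act_word p q ([(Z, True), (A, True), (Z, False)] @ replicate (nat (ee p q Z)) (A, False)) (k, L) = (k, L)"
proof -
  have e: "int (nat (ee p q Z)) = ee p q Z" using ee_pos[of Z] by simp
  obtain k' L' where n: "neg_act p q Z (k, L) = (k', L')" by fastforce
  have "act_word p q ([(Z, True), (A, True), (Z, False)] @ replicate (nat (ee p q Z)) (A, False)) (k, L)
      = pos_act p q Z (fst (neg_act p q Z (k - ee p q Z, L)) + 1, snd (neg_act p q Z (k - ee p q Z, L)))"
    using assms(2) e by (simp split: prod.splits)
  also have "\<dots> = pos_act p q Z (neg_act p q Z (k, L))"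
    by (simp add: neg_act_shift)
  also have "\<dots> = (k, L)" by (rule pos_neg[OF assms])
  finally show ?thesis .
qed

lemma act_relators:
  assumes "r \<in> relators p q" "valid p q (snd x)"
  shows "act_word p q r x = x"
proof -
  obtain k L where x: "x = (k, L)" by fastforce
  have "r = [(S, True), (A, True), (S, False)] @ replicate (nat (ee p q S)) (A, False) \<or>
        r = [(T, True), (A, True), (T, False)] @ replicate (nat (ee p q T)) (A, False)"
    using assms(1) by (auto simp: relators_def ee_def)
  then show ?thesis using act_relator[of L S k] act_relator[of L T k] assms(2) x by auto
qed

lemma act_red_step:
  assumes "red_step p q u v" "valid p q (snd x)"
  shows "act_word p q u x = act_word p q v x"
proof -
  from assms(1) obtain a b r where uv: "u = a @ r @ b" "v = a @ b"
    "r \<in> relators p q \<or> (\<exists>g c. r = [(g, c), (g, \<not> c)])"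
    unfolding red_step_def by blast
  have vb: "valid p q (snd (act_word p q b x))" by (rule valid_act_word[OF assms(2)])
  have "act_word p q r (act_word p q b x) = act_word p q b x"
  proof (cases "r \<in> relators p q")
    case True
    then show ?thesis using act_relators vb by blast
  next
    case False
    then obtain g c where "r = [(g, c), (g, \<not> c)]" using uv(3) by blast
    then show ?thesis using act_inv_pair[OF vb, of g "\<not> c"] by simp
  qed
  then show ?thesis using uv by simp
qed

lemma act_weq:
  assumes "weq p q u v" "valid p q (snd x)"
  shows "act_word p q u x = act_word p q v x"
  using assms(1) unfolding weq_def
proof (induction rule: equivclp_induct)
  case base
  then show ?case by simp
next
  case (step y z)
  then show ?case using act_red_step assms(2) by metis
qed

end


definition apow :: "int \<Rightarrow> word" where
  "apow k = (if k \<ge> 0 then replicate (nat k) (A, True) else replicate (nat (- k)) (A, False))"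

fun item_word :: "item \<Rightarrow> word" where
  "item_word (Z, b, c) = (Z, b) # replicate (nat c) (A, True)"

definition nfw :: "item list \<Rightarrow> word" where
  "nfw L = concat (map item_word L)"

definition nf :: "int \<times> item list \<Rightarrow> word" where
  "nf x = apow (fst x) @ nfw (snd x)"

lemma nfw_Nil [simp]: "nfw [] = []" by (simp add: nfw_def)
lemma nfw_Cons [simp]: "nfw (x # L) = item_word x @ nfw L" by (simp add: nfw_def)
lemma nfw_append [simp]: "nfw (L @ M) = nfw L @ nfw M" by (simp add: nfw_def)

context primes2
begin

lemma act_apow [simp]: "act_word p q (apow k) (j, L) = (j + k, L)"
  by (simp add: apow_def)

lemma act_nfw:
  assumes "valid p q L" shows "act_word p q (nfw L) (0, []) = (0, L)"
  using assms
proof (induction L)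
  case Nil
  then show ?case by simp
next
  case (Cons x L)
  obtain Z b c where x: "x = (Z, b, c)" by (cases x)
  have vL: "valid p q L" and ix: "okitem p q x" and pr: "L = [] \<or> okpair x (hd L)"
    using Cons.prems by (auto simp: valid_Cons)
  have IH: "act_word p q (nfw L) (0, []) = (0, L)" using Cons.IH vL .
  have c: "int (nat c) = c" using ix x by (cases b) auto
  show ?case
  proof (cases b)
    case True
    then have "c = 0" using ix x by simp
    then show ?thesis using True x IH ix pr
      by (cases L) (auto simp: pos_act_def)
  next
    case False
    then have c2: "0 \<le> c" "c < ee p q Z" using ix x by auto
    have dm: "c div ee p q Z = 0" "c mod ee p q Z = c" using c2 by auto
    show ?thesis using False x IH ix pr c dm
      by (cases L) (auto simp: neg_act_def)
  qed
qed

lemma act_nf: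
  assumes "valid p q (snd x)" shows "act_word p q (nf x) (0, []) = x"
  using act_nfw[OF assms] by (cases x) (simp add: nf_def)

lemma nf_unique:
  assumes "valid p q (snd x)" "valid p q (snd y)" "weq p q (nf x) (nf y)"
  shows "x = y"
  using act_weq[OF assms(3), of "(0, [])"] act_nf[OF assms(1)] act_nf[OF assms(2)] by simp

end


context group
begin

lemma inv_cancel_l [simp]:
  assumes "x \<in> carrier G" "z \<in> carrier G"
  shows "inv x \<otimes> (x \<otimes> z) = z"
  using assms by (simp add: m_assoc[symmetric])

lemma inv_cancel_r [simp]:
  assumes "x \<in> carrier G" "z \<in> carrier G"
  shows "x \<otimes> (inv x \<otimes> z) = z"
  using assms by (simp add: m_assoc[symmetric])

lemma conj_nat_pow:
  assumes "x \<in> carrier G" "y \<in> carrier G"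
  shows "x \<otimes> (y [^] (n::nat)) \<otimes> inv x = (x \<otimes> y \<otimes> inv x) [^] n"
proof (induction n)
  case 0
  then show ?case using assms by simp
next
  case (Suc n)
  have "x \<otimes> (y [^] Suc n) \<otimes> inv x = (x \<otimes> (y [^] n) \<otimes> inv x) \<otimes> (x \<otimes> y \<otimes> inv x)"
    using assms by (simp add: m_assoc)
  then show ?case using Suc assms by simp
qed

lemma conj_inv:
  assumes "x \<in> carrier G" "y \<in> carrier G"
  shows "x \<otimes> inv y \<otimes> inv x = inv (x \<otimes> y \<otimes> inv x)"
proof -
  have "inv (x \<otimes> y \<otimes> inv x) = inv (inv x) \<otimes> inv (x \<otimes> y)"
    using assms by (simp add: inv_mult_group)
  also have "\<dots> = x \<otimes> (inv y \<otimes> inv x)" using assms by (simp add: inv_mult_group)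
  finally show ?thesis using assms by (simp add: m_assoc)
qed

lemma mult_inv_one_eq:
  assumes "x \<in> carrier G" "y \<in> carrier G" "x \<otimes> inv y = \<one>"
  shows "x = y"
proof -
  have "inv (inv y) = x" using assms by (intro inv_equality) auto
  then show ?thesis using assms by simp
qed

lemma conj_int_pow:
  assumes "x \<in> carrier G" "y \<in> carrier G"
  shows "x \<otimes> (y [^] (k::int)) \<otimes> inv x = (x \<otimes> y \<otimes> inv x) [^] k"
proof (cases "k < 0")
  case True
  have "x \<otimes> (y [^] k) \<otimes> inv x = x \<otimes> inv (y [^] nat (- k)) \<otimes> inv x"
    using True by (simp add: int_pow_def2 del: pow_nat)
  also have "\<dots> = inv (x \<otimes> (y [^] nat (- k)) \<otimes> inv x)"
    using assms by (intro conj_inv) auto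
  also have "\<dots> = inv ((x \<otimes> y \<otimes> inv x) [^] nat (- k))"
    using assms by (simp only: conj_nat_pow)
  also have "\<dots> = (x \<otimes> y \<otimes> inv x) [^] k"
    using True by (simp add: int_pow_def2 del: pow_nat)
  finally show ?thesis .
next
  case False
  have "x \<otimes> (y [^] k) \<otimes> inv x = x \<otimes> (y [^] nat k) \<otimes> inv x"
    using False by (simp add: int_pow_def2 del: pow_nat)
  also have "\<dots> = (x \<otimes> y \<otimes> inv x) [^] nat k"
    using assms by (simp only: conj_nat_pow)
  also have "\<dots> = (x \<otimes> y \<otimes> inv x) [^] k"
    using False by (simp add: int_pow_def2 del: pow_nat)
  finally show ?thesis .
qed

end

context primes2
begin

abbreviation GG where "GG \<equiv> Gpres p q"
abbreviation gmul (infixl "\<cdot>" 70) where "x \<cdot> y \<equiv> x \<otimes>\<^bsub>Gpres p q\<^esub> y"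
abbreviation ginv where "ginv x \<equiv> inv\<^bsub>Gpres p q\<^esub> x"
abbreviation gone where "gone \<equiv> \<one>\<^bsub>Gpres p q\<^esub>"
abbreviation aa where "aa \<equiv> cls p q [(A, True)]"
abbreviation gZ where "gZ Z \<equiv> cls p q [(Z, True)]"

sublocale G: group "Gpres p q" by (rule gpres_group)

lemma cls_app: "cls p q (u @ v) = cls p q u \<cdot> cls p q v"
  by (simp add: mult_cls)

lemma cls_Cons: "cls p q (l # v) = cls p q [l] \<cdot> cls p q v"
  by (subst cls_app[symmetric]) simp

lemma cls_Nil: "cls p q [] = gone"
  by (simp add: one_cls)

lemma cls_neg: "cls p q [(Z, False)] = ginv (gZ Z)"
  by (simp add: inv_cls winv_def)

lemma aa_carr [simp]: "aa \<in> carrier GG" by simp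
lemma gZ_carr [simp]: "gZ Z \<in> carrier GG" by simp

lemma cls_repA: "cls p q (replicate n (A, True)) = aa [^]\<^bsub>GG\<^esub> n"
proof (induction n)
  case 0
  then show ?case by (simp add: cls_Nil)
next
  case (Suc n)
  have "cls p q (replicate (Suc n) (A, True)) = cls p q (replicate n (A, True) @ [(A, True)])"
    by (simp add: replicate_append_same)
  also have "\<dots> = aa [^]\<^bsub>GG\<^esub> n \<cdot> aa" by (simp only: cls_app Suc)
  finally show ?case by simp
qed

lemma cls_repAinv: "cls p q (replicate n (A, False)) = ginv (aa [^]\<^bsub>GG\<^esub> n)"
proof -
  have "cls p q (replicate n (A, False)) = cls p q (winv (replicate n (A, True)))"
    by (simp add: winv_def)
  also have "\<dots> = ginv (cls p q (replicate n (A, True)))" by (simp add: inv_cls)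
  finally show ?thesis by (simp add: cls_repA)
qed

lemma cls_apow: "cls p q (apow k) = aa [^]\<^bsub>GG\<^esub> k"
  by (simp add: apow_def cls_repA cls_repAinv int_pow_def2 del: pow_nat)

lemma relZ:
  assumes "Z \<noteq> A"
  shows "gZ Z \<cdot> aa \<cdot> ginv (gZ Z) = aa [^]\<^bsub>GG\<^esub> (ee p q Z)"
proof -
  have e: "ee p q Z \<ge> 0" using ee_pos[of Z] by simp
  let ?r = "[(Z, True), (A, True), (Z, False)] @ replicate (nat (ee p q Z)) (A, False)"
  have "?r \<in> relators p q" using assms by (cases Z) (auto simp: relators_def ee_def)
  then have "cls p q ?r = gone" by (rule relator_one)
  moreover have "cls p q ?r = gZ Z \<cdot> aa \<cdot> cls p q [(Z, False)] \<cdot> cls p q (replicate (nat (ee p q Z)) (A, False))"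
    by (simp add: cls_app[symmetric])
  ultimately have "gZ Z \<cdot> aa \<cdot> cls p q [(Z, False)] \<cdot> cls p q (replicate (nat (ee p q Z)) (A, False)) = gone"
    by simp
  then have "gZ Z \<cdot> aa \<cdot> ginv (gZ Z) \<cdot> ginv (aa [^]\<^bsub>GG\<^esub> nat (ee p q Z)) = gone"
    unfolding cls_neg cls_repAinv .
  then have "gZ Z \<cdot> aa \<cdot> ginv (gZ Z) = aa [^]\<^bsub>GG\<^esub> nat (ee p q Z)"
    by (rule G.mult_inv_one_eq[rotated 2]) simp_all
  moreover have "aa [^]\<^bsub>GG\<^esub> nat (ee p q Z) = aa [^]\<^bsub>GG\<^esub> (ee p q Z)" by (rule pow_nat[OF e])
  ultimately show ?thesis by (rule trans)
qed

end


context primes2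
begin

lemma apow_carr [simp]: "aa [^]\<^bsub>GG\<^esub> (k::int) \<in> carrier GG"
  by simp

lemma conjZ:
  assumes "Z \<noteq> A"
  shows "gZ Z \<cdot> aa [^]\<^bsub>GG\<^esub> (k::int) \<cdot> ginv (gZ Z) = aa [^]\<^bsub>GG\<^esub> (ee p q Z * k)"
proof -
  have "gZ Z \<cdot> aa [^]\<^bsub>GG\<^esub> k \<cdot> ginv (gZ Z) = (gZ Z \<cdot> aa \<cdot> ginv (gZ Z)) [^]\<^bsub>GG\<^esub> k"
    by (rule G.conj_int_pow) simp_all
  also have "\<dots> = (aa [^]\<^bsub>GG\<^esub> (ee p q Z)) [^]\<^bsub>GG\<^esub> k" by (simp only: relZ[OF assms])
  also have "\<dots> = aa [^]\<^bsub>GG\<^esub> (ee p q Z * k)" by (simp add: G.int_pow_pow)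
  finally show ?thesis .
qed

lemma swapZ:
  assumes "Z \<noteq> A"
  shows "gZ Z \<cdot> aa [^]\<^bsub>GG\<^esub> (k::int) = aa [^]\<^bsub>GG\<^esub> (ee p q Z * k) \<cdot> gZ Z"
proof -
  have "aa [^]\<^bsub>GG\<^esub> (ee p q Z * k) \<cdot> gZ Z = gZ Z \<cdot> aa [^]\<^bsub>GG\<^esub> k \<cdot> ginv (gZ Z) \<cdot> gZ Z"
    by (simp only: conjZ[OF assms])
  also have "\<dots> = gZ Z \<cdot> aa [^]\<^bsub>GG\<^esub> k" by (simp add: G.m_assoc)
  finally show ?thesis by simp
qed

lemma swapZinv:
  assumes "Z \<noteq> A"
  shows "ginv (gZ Z) \<cdot> aa [^]\<^bsub>GG\<^esub> (ee p q Z * d) = aa [^]\<^bsub>GG\<^esub> d \<cdot> ginv (gZ Z)"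
proof -
  have "ginv (gZ Z) \<cdot> aa [^]\<^bsub>GG\<^esub> (ee p q Z * d) = ginv (gZ Z) \<cdot> (gZ Z \<cdot> aa [^]\<^bsub>GG\<^esub> d \<cdot> ginv (gZ Z))"
    by (simp only: conjZ[OF assms])
  also have "\<dots> = aa [^]\<^bsub>GG\<^esub> d \<cdot> ginv (gZ Z)" by (simp add: G.m_assoc)
  finally show ?thesis .
qed

lemma cls_item:
  assumes "0 \<le> c"
  shows "cls p q (item_word (Z, b, c)) = (if b then gZ Z else ginv (gZ Z)) \<cdot> aa [^]\<^bsub>GG\<^esub> c"
proof -
  have iw: "item_word (Z, b, c) = [(Z, b)] @ replicate (nat c) (A, True)" by simp
  have "cls p q (item_word (Z, b, c)) = cls p q [(Z, b)] \<cdot> aa [^]\<^bsub>GG\<^esub> (nat c)"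
    by (simp only: iw cls_app cls_repA)
  also have "aa [^]\<^bsub>GG\<^esub> (nat c) = aa [^]\<^bsub>GG\<^esub> c" by (rule pow_nat[OF assms])
  finally show ?thesis by (cases b) (simp_all add: cls_neg)
qed

lemma cls_nf: "cls p q (nf (k, L)) = aa [^]\<^bsub>GG\<^esub> k \<cdot> cls p q (nfw L)"
  by (simp add: nf_def cls_app cls_apow)

lemma nfw_carr [simp]: "cls p q (nfw L) \<in> carrier GG" by simp

lemma act_cls:
  assumes "valid p q (snd x)"
  shows "cls p q [l] \<cdot> cls p q (nf x) = cls p q (nf (act p q l x))"
proof -
  obtain k L where x: "x = (k, L)" by fastforce
  obtain g b where l: "l = (g, b)" by fastforce
  have vL: "valid p q L" using assms x by simp
  show ?thesis
  proof (cases "g = A")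
    case True
    show ?thesis
    proof (cases b)
      case True
      have "aa [^]\<^bsub>GG\<^esub> (1 + k) = aa [^]\<^bsub>GG\<^esub> (1::int) \<cdot> aa [^]\<^bsub>GG\<^esub> k"
        by (simp only: G.int_pow_mult[OF aa_carr])
      then have "aa \<cdot> (aa [^]\<^bsub>GG\<^esub> k \<cdot> cls p q (nfw L)) = aa [^]\<^bsub>GG\<^esub> (1 + k) \<cdot> cls p q (nfw L)"
        by (simp add: G.m_assoc)
      then show ?thesis using True \<open>g = A\<close> x l by (simp add: cls_nf add.commute)
    next
      case False
      have e1: "k - 1 = (- 1::int) + k" by simp
      have "aa [^]\<^bsub>GG\<^esub> (k - 1) = aa [^]\<^bsub>GG\<^esub> (- 1::int) \<cdot> aa [^]\<^bsub>GG\<^esub> k"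
        by (simp only: e1 G.int_pow_mult[OF aa_carr])
      also have "aa [^]\<^bsub>GG\<^esub> (- 1::int) = ginv aa" by (simp add: G.int_pow_neg)
      finally have "ginv aa \<cdot> (aa [^]\<^bsub>GG\<^esub> k \<cdot> cls p q (nfw L)) = aa [^]\<^bsub>GG\<^esub> (k - 1) \<cdot> cls p q (nfw L)"
        by (simp add: G.m_assoc)
      then show ?thesis using False \<open>g = A\<close> x l by (simp add: cls_nf cls_neg)
    qed
  next
    case gA: False
    show ?thesis
    proof (cases b)
      case True
      show ?thesis
      proof (cases "\<exists>c L'. L = (g, False, c) # L'")
        case True
        then obtain c L' where L: "L = (g, False, c) # L'" by blast
        have c: "0 \<le> c" using vL L by (simp add: valid_Cons)
        have "gZ g \<cdot> (aa [^]\<^bsub>GG\<^esub> k \<cdot> (ginv (gZ g) \<cdot> aa [^]\<^bsub>GG\<^esub> c \<cdot> cls p q (nfw L')))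
            = (gZ g \<cdot> aa [^]\<^bsub>GG\<^esub> k \<cdot> ginv (gZ g)) \<cdot> aa [^]\<^bsub>GG\<^esub> c \<cdot> cls p q (nfw L')"
          by (simp add: G.m_assoc)
        also have "\<dots> = aa [^]\<^bsub>GG\<^esub> (ee p q g * k + c) \<cdot> cls p q (nfw L')"
          by (simp add: conjZ[OF gA] G.int_pow_mult G.m_assoc)
        finally show ?thesis using \<open>b\<close> x l L c gA
          by (simp add: cls_nf cls_item cls_app del: item_word.simps)
      next
        case False
        then have pa: "pos_act p q g (k, L) = (ee p q g * k, (g, True, 0) # L)"
          by (cases L) (auto simp: pos_act_def)
        have "gZ g \<cdot> (aa [^]\<^bsub>GG\<^esub> k \<cdot> cls p q (nfw L))
            = aa [^]\<^bsub>GG\<^esub> (ee p q g * k) \<cdot> (gZ g \<cdot> cls p q (nfw L))"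
          by (simp add: swapZ[OF gA] G.m_assoc[symmetric])
        then show ?thesis using \<open>b\<close> x l pa gA
          by (simp add: cls_nf cls_item cls_app del: item_word.simps)
      qed
    next
      case False
      define d where "d = k div ee p q g"
      define r where "r = k mod ee p q g"
      have kdr: "k = ee p q g * d + r" by (simp add: d_def r_def)
      have r0: "0 \<le> r" using ee_pos[of g] by (simp add: r_def)
      have base: "ginv (gZ g) \<cdot> aa [^]\<^bsub>GG\<^esub> k = aa [^]\<^bsub>GG\<^esub> d \<cdot> ginv (gZ g) \<cdot> aa [^]\<^bsub>GG\<^esub> r"
      proof -
        have "ginv (gZ g) \<cdot> aa [^]\<^bsub>GG\<^esub> k = ginv (gZ g) \<cdot> aa [^]\<^bsub>GG\<^esub> (ee p q g * d) \<cdot> aa [^]\<^bsub>GG\<^esub> r"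
          by (simp add: kdr G.int_pow_mult G.m_assoc)
        also have "\<dots> = aa [^]\<^bsub>GG\<^esub> d \<cdot> ginv (gZ g) \<cdot> aa [^]\<^bsub>GG\<^esub> r"
          by (simp only: swapZinv[OF gA])
        finally show ?thesis .
      qed
      show ?thesis
      proof (cases "\<exists>c L'. L = (g, True, c) # L' \<and> r = 0")
        case True
        then obtain c L' where L: "L = (g, True, c) # L'" and "r = 0" by blast
        have c: "c = 0" using vL L by (simp add: valid_Cons)
        have na: "neg_act p q g (k, L) = (d, L')" using L \<open>r = 0\<close> by (simp add: d_def r_def)
        have "ginv (gZ g) \<cdot> (aa [^]\<^bsub>GG\<^esub> k \<cdot> (gZ g \<cdot> cls p q (nfw L')))
           = (ginv (gZ g) \<cdot> aa [^]\<^bsub>GG\<^esub> k) \<cdot> gZ g \<cdot> cls p q (nfw L')"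
          by (simp add: G.m_assoc)
        also have "\<dots> = aa [^]\<^bsub>GG\<^esub> d \<cdot> cls p q (nfw L')"
          using \<open>r = 0\<close> by (simp add: base G.m_assoc)
        finally show ?thesis using \<open>\<not> b\<close> x l L c na gA
          by (simp add: cls_nf cls_item cls_app cls_neg del: item_word.simps)
      next
        case False
        then have na: "neg_act p q g (k, L) = (d, (g, False, r) # L)"
          by (cases L) (auto simp: neg_act_def d_def r_def)
        have "ginv (gZ g) \<cdot> (aa [^]\<^bsub>GG\<^esub> k \<cdot> cls p q (nfw L))
           = aa [^]\<^bsub>GG\<^esub> d \<cdot> (ginv (gZ g) \<cdot> aa [^]\<^bsub>GG\<^esub> r \<cdot> cls p q (nfw L))"
          by (simp add: base G.m_assoc[symmetric])
        then show ?thesis using \<open>\<not> b\<close> x l na gA r0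
          by (simp add: cls_nf cls_item cls_app cls_neg del: item_word.simps)
      qed
    qed
  qed
qed

end


lemma valid_append:
  "valid p q (L @ M) \<longleftrightarrow> valid p q L \<and> valid p q M \<and> (L = [] \<or> M = [] \<or> okpair (last L) (hd M))"
proof (induction L)
  case Nil
  then show ?case by simp
next
  case (Cons x L)
  then show ?case
    by (cases L; cases M) (auto simp: valid_Cons)
qed

lemma valid_snoc:
  "valid p q (L @ [y]) \<longleftrightarrow> valid p q L \<and> okitem p q y \<and> (L = [] \<or> okpair (last L) y)"
  by (simp add: valid_append)

context primes2
begin

definition elt :: "int \<times> item list \<Rightarrow> word set" where
  "elt x = cls p q (nf x)"

lemma elt_carr [simp]: "elt x \<in> carrier GG"
  by (simp add: elt_def)

lemma elt_eq: "elt (k, L) = aa [^]\<^bsub>GG\<^esub> k \<cdot> cls p q (nfw L)"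
  by (simp add: elt_def cls_nf)

lemma cls_act_word:
  assumes "valid p q (snd x)"
  shows "cls p q w \<cdot> elt x = elt (act_word p q w x)"
  using assms
proof (induction w arbitrary: x)
  case Nil
  then show ?case by (simp add: cls_Nil elt_def)
next
  case (Cons l w)
  have "cls p q (l # w) \<cdot> elt x = cls p q [l] \<cdot> (cls p q w \<cdot> elt x)"
    by (simp add: cls_app[of "[l]" w, simplified] G.m_assoc)
  also have "\<dots> = cls p q [l] \<cdot> elt (act_word p q w x)" using Cons by simp
  also have "\<dots> = elt (act p q l (act_word p q w x))"
    unfolding elt_def by (rule act_cls) (rule valid_act_word[OF Cons.prems])
  finally show ?case by simp
qed

lemma nf_exists:
  assumes "g \<in> carrier GG"
  shows "\<exists>x. valid p q (snd x) \<and> g = elt x"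
proof -
  obtain w where g: "g = cls p q w" using assms by (auto simp: carrier_Gpres)
  have "cls p q w \<cdot> elt (0, []) = elt (act_word p q w (0, []))"
    by (rule cls_act_word) simp
  moreover have "elt (0, []) = gone" by (simp add: elt_def nf_def apow_def cls_Nil)
  ultimately have "g = elt (act_word p q w (0, []))" using g by simp
  moreover have "valid p q (snd (act_word p q w (0, [])))" by (rule valid_act_word) simp
  ultimately show ?thesis by blast
qed

lemma elt_inj:
  assumes "valid p q (snd x)" "valid p q (snd y)" "elt x = elt y"
  shows "x = y"
  using assms nf_unique cls_eq_iff unfolding elt_def by blast

lemma item_word0 [simp]: "item_word (Z, b, 0) = [(Z, b)]" by simp

lemma rmul_letter:
  assumes "valid p q L" "Z \<noteq> A"
  shows "\<exists>L'. valid p q L' \<and> elt (k, L) \<cdot> cls p q [(Z, b)] = elt (k, L') \<and>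
           (L' = L @ [(Z, b, 0)] \<or> length L' < length L + 1)"
proof (cases "\<exists>L0 c. L = L0 @ [(Z, \<not> b, c)] \<and> c = 0")
  case True
  then obtain L0 where L: "L = L0 @ [(Z, \<not> b, 0)]" by blast
  have v: "valid p q L0" using assms L by (simp add: valid_snoc)
  have "elt (k, L) \<cdot> cls p q [(Z, b)] = aa [^]\<^bsub>GG\<^esub> k \<cdot> cls p q (nfw L0) \<cdot> (cls p q [(Z, \<not> b)] \<cdot> cls p q [(Z, b)])"
    by (simp add: elt_eq L cls_app G.m_assoc)
  also have "cls p q [(Z, \<not> b)] \<cdot> cls p q [(Z, b)] = gone"
    by (cases b) (simp_all add: cls_neg)
  finally show ?thesis using v L by (intro exI[of _ L0]) (simp add: elt_eq)
next
  case False
  have v: "valid p q (L @ [(Z, b, 0)])"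
  proof -
    have "okitem p q (Z, b, 0)" using assms ee_pos[of Z] by simp
    moreover have "L = [] \<or> okpair (last L) (Z, b, 0)"
    proof (cases "L = []")
      case False
      then obtain L0 y where L: "L = L0 @ [y]" by (metis rev_exhaust)
      obtain Z' b' c' where y: "y = (Z', b', c')" by (cases y)
      have iy: "okitem p q y" using assms L by (simp add: valid_snoc)
      have "okpair y (Z, b, 0)"
      proof (cases "Z' = Z")
        case True
        show ?thesis
        proof (cases "b' = b")
          case True
          then show ?thesis using y \<open>Z' = Z\<close> by auto
        next
          case False
          then have "b' = (\<not> b)" by auto
          then have "c' \<noteq> 0" using \<open>\<not> (\<exists>L0 c. L = L0 @ [(Z, \<not> b, c)] \<and> c = 0)\<close> L y True by auto
          moreover have "b' \<longrightarrow> c' = 0" using iy y by simp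
          ultimately show ?thesis using y True \<open>b' = (\<not> b)\<close> by auto
        qed
      next
        case False
        then show ?thesis using y by simp
      qed
      then show ?thesis using L by simp
    qed simp
    ultimately show ?thesis using assms by (simp add: valid_snoc)
  qed
  have "elt (k, L) \<cdot> cls p q [(Z, b)] = elt (k, L @ [(Z, b, 0)])"
    by (simp add: elt_eq cls_app G.m_assoc)
  then show ?thesis using v by blast
qed

definition witems :: "(gen \<times> bool) list \<Rightarrow> item list" where
  "witems W = map (\<lambda>(Z, b). (Z, b, 0)) W"

lemma witems_simps [simp]: "witems [] = []" "witems (W @ [(Z, b)]) = witems W @ [(Z, b, 0)]"
  "length (witems W) = length W"
  by (simp_all add: witems_def)

lemma rmul_word:
  assumes "valid p q L" "\<forall>l\<in>set W. fst l \<noteq> A"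
  shows "\<exists>L'. valid p q L' \<and> elt (k, L) \<cdot> cls p q W = elt (k, L') \<and>
           (L' = L @ witems W \<or> length L' < length L + length W)"
  using assms(2)
proof (induction W rule: rev_induct)
  case Nil
  then show ?case using assms(1) by (intro exI[of _ L]) (simp add: cls_Nil)
next
  case (snoc l W)
  obtain Z b where l: "l = (Z, b)" by fastforce
  from snoc obtain L' where L': "valid p q L'" "elt (k, L) \<cdot> cls p q W = elt (k, L')"
      "L' = L @ witems W \<or> length L' < length L + length W" by auto
  have Z: "Z \<noteq> A" using snoc.prems l by auto
  obtain L'' where L'': "valid p q L''" "elt (k, L') \<cdot> cls p q [(Z, b)] = elt (k, L'')"
    "L'' = L' @ [(Z, b, 0)] \<or> length L'' < length L' + 1"
    using rmul_letter[OF L'(1) Z] by blast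
  have "elt (k, L) \<cdot> cls p q (W @ [l]) = elt (k, L) \<cdot> cls p q W \<cdot> cls p q [(Z, b)]"
    by (simp add: cls_app G.m_assoc l)
  also have "\<dots> = elt (k, L'')" using L'(2) L''(2) by simp
  finally show ?case using L'(3) L''(1,3) l by (intro exI[of _ L'']) auto
qed

lemma lmul_pos:
  assumes "valid p q L" "Z \<noteq> A" "L = [] \<or> fst (hd L) \<noteq> Z \<or> fst (snd (hd L))"
  shows "gZ Z \<cdot> elt (k, L) = elt (ee p q Z * k, (Z, True, 0) # L)"
proof -
  have "gZ Z \<cdot> elt (k, L) = elt (act p q (Z, True) (k, L))"
    unfolding elt_def by (rule act_cls) (simp add: assms)
  moreover have "act p q (Z, True) (k, L) = (ee p q Z * k, (Z, True, 0) # L)"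
    using assms by (cases L) (auto simp: pos_act_def)
  ultimately show ?thesis by simp
qed

lemma lmul_neg:
  assumes "valid p q L" "Z \<noteq> A" "L = [] \<or> \<not> fst (snd (hd L))"
  shows "ginv (gZ Z) \<cdot> elt (k, L) = elt (k div ee p q Z, (Z, False, k mod ee p q Z) # L)"
proof -
  have "ginv (gZ Z) \<cdot> elt (k, L) = elt (act p q (Z, False) (k, L))"
    unfolding elt_def cls_neg[symmetric] by (rule act_cls) (simp add: assms)
  moreover have "act p q (Z, False) (k, L) = (k div ee p q Z, (Z, False, k mod ee p q Z) # L)"
    using assms by (cases L) (auto simp: neg_act_def)
  ultimately show ?thesis by simp
qed

end


lemma comm_list:
  assumes "B @ L = L @ C" "length B = length C" "B \<noteq> []"
    "\<forall>j. 0 < j \<and> j < length B \<longrightarrow> take j B \<noteq> drop (length C - j) C"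
  shows "\<exists>n. L = concat (replicate n B) \<and> (0 < n \<longrightarrow> B = C)"
  using assms(1)
proof (induction L rule: length_induct)
  case (1 L)
  show ?case
  proof (cases "L = []")
    case True
    then show ?thesis by (intro exI[of _ 0]) simp
  next
    case False
    show ?thesis
    proof (cases "length L < length B")
      case True
      let ?j = "length L"
      have "take ?j (B @ L) = take ?j B" using True by simp
      moreover have "take ?j (L @ C) = L" by simp
      ultimately have t: "take ?j B = L" using "1.prems" by simp
      have "drop (length B) (B @ L) = L" by simp
      moreover have "drop (length B) (L @ C) = drop (length C - ?j) C"
        using True assms(2) by simp
      ultimately have "drop (length C - ?j) C = L" using "1.prems" by simp
      then have "take ?j B = drop (length C - ?j) C" using t by simp
      moreover have "0 < ?j" using False by simp
      ultimately show ?thesis using assms(4) True by blast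
    next
      case False
      have "take (length B) (B @ L) = B" by simp
      moreover have "take (length B) (L @ C) = take (length B) L" using False by simp
      ultimately have tB: "take (length B) L = B" using "1.prems" by simp
      define L' where "L' = drop (length B) L"
      have L: "L = B @ L'" using tB by (metis L'_def append_take_drop_id)
      have "B @ B @ L' = B @ L' @ C" using "1.prems" L by simp
      then have eq': "B @ L' = L' @ C" by simp
      have "length L' < length L" using L assms(3) by simp
      then obtain n where n: "L' = concat (replicate n B)" using "1.IH" eq' by blast
      have "L = concat (replicate (Suc n) B)" using L n by simp
      moreover have "B = C"
      proof -
        have "B @ concat (replicate (Suc n) B) = concat (replicate (Suc n) B) @ C"
          using "1.prems" L n by simp
        then have "concat (replicate (Suc n) B) @ B = concat (replicate (Suc n) B) @ C"
          by (metis concat_replicate_trivial replicate_Suc replicate_append_same concat.simps(2)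
              concat_append concat.simps(1) append_Nil2)
        then show ?thesis by simp
      qed
      ultimately show ?thesis by blast
    qed
  qed
qed

context primes2
begin

definition wt :: "item list \<Rightarrow> int" where
  "wt P = prod_list (map (\<lambda>x. ee p q (fst x)) P)"

lemma wt_simps [simp]: "wt [] = 1" "wt (x # P) = ee p q (fst x) * wt P"
  by (simp_all add: wt_def)

lemma lmul_posword:
  assumes "valid p q P" "\<forall>x\<in>set P. snd x = (True, 0) \<and> fst x \<noteq> A"
    "valid p q L" "L = [] \<or> fst (snd (hd L))"
  shows "cls p q (nfw P) \<cdot> elt (k, L) = elt (wt P * k, P @ L) \<and> valid p q (P @ L)"
  using assms(1,2)
proof (induction P)
  case Nil
  then show ?case using assms(3) by (simp add: cls_Nil)
next
  case (Cons x P)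
  obtain Z where x: "x = (Z, True, 0)" and Z: "Z \<noteq> A" using Cons.prems(2)
    by (cases x) auto
  have vP: "valid p q P" using Cons.prems(1) by (simp add: valid_Cons)
  from Cons.IH[OF vP] Cons.prems(2) have IH: "cls p q (nfw P) \<cdot> elt (k, L) = elt (wt P * k, P @ L)"
    "valid p q (P @ L)" by auto
  have hd: "P @ L = [] \<or> fst (hd (P @ L)) \<noteq> Z \<or> fst (snd (hd (P @ L)))"
    using assms(4) Cons.prems(2) by (cases P) auto
  have "cls p q (nfw (x # P)) \<cdot> elt (k, L) = gZ Z \<cdot> (cls p q (nfw P) \<cdot> elt (k, L))"
    by (simp add: x cls_Cons[of _ "nfw P"] G.m_assoc)
  also have "\<dots> = elt (ee p q Z * (wt P * k), (Z, True, 0) # P @ L)"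
    using IH lmul_pos[OF IH(2) Z hd] by simp
  finally have eq: "cls p q (nfw (x # P)) \<cdot> elt (k, L) = elt (wt (x # P) * k, (x # P) @ L)"
    using x by (simp add: mult.assoc)
  have "valid p q ((x # P) @ L)"
  proof -
    have "okitem p q x" using x Z by simp
    moreover have "P @ L = [] \<or> okpair x (hd (P @ L))"
      using hd x by (cases "P @ L") auto
    ultimately show ?thesis using IH(2) by (simp add: valid_Cons)
  qed
  then show ?case using eq by simp
qed

lemma lmul_negword:
  assumes "\<forall>x\<in>set N. snd x = (False, 0) \<and> fst x \<noteq> A"
    "valid p q L" "L = [] \<or> \<not> fst (snd (hd L))"
  shows "\<exists>k' D. cls p q (nfw N) \<cdot> elt (k, L) = elt (k', D @ L) \<and> valid p q (D @ L) \<and>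
           map fst D = map fst N \<and> (\<forall>x\<in>set D. \<not> fst (snd x)) \<and> (D = N \<longrightarrow> k = wt N * k')"
  using assms(1)
proof (induction N)
  case Nil
  then show ?case using assms(2) by (intro exI[of _ k] exI[of _ "[]"]) (simp add: cls_Nil)
next
  case (Cons x N)
  obtain Z where x: "x = (Z, False, 0)" and Z: "Z \<noteq> A" using Cons.prems
    by (cases x) auto
  from Cons obtain k'' D' where IH: "cls p q (nfw N) \<cdot> elt (k, L) = elt (k'', D' @ L)"
    "valid p q (D' @ L)" "map fst D' = map fst N" "\<forall>x\<in>set D'. \<not> fst (snd x)"
    "D' = N \<longrightarrow> k = wt N * k''" by auto
  have hd: "D' @ L = [] \<or> \<not> fst (snd (hd (D' @ L)))"
    using assms(3) IH(4) by (cases D') auto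
  define d where "d = k'' div ee p q Z"
  define r where "r = k'' mod ee p q Z"
  have "cls p q (nfw (x # N)) \<cdot> elt (k, L) = ginv (gZ Z) \<cdot> (cls p q (nfw N) \<cdot> elt (k, L))"
    by (simp add: x cls_Cons[of _ "nfw N"] G.m_assoc cls_neg)
  also have "\<dots> = elt (d, (Z, False, r) # D' @ L)"
    using IH(1) lmul_neg[OF IH(2) Z hd] by (simp add: d_def r_def)
  finally have eq: "cls p q (nfw (x # N)) \<cdot> elt (k, L) = elt (d, ((Z, False, r) # D') @ L)" by simp
  have r: "0 \<le> r" "r < ee p q Z" using ee_pos[of Z] by (simp_all add: r_def)
  have v: "valid p q (((Z, False, r) # D') @ L)"
  proof -
    have "okitem p q (Z, False, r)" using r Z by simp
    moreover have "D' @ L = [] \<or> okpair (Z, False, r) (hd (D' @ L))"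
      using hd by (cases "D' @ L") auto
    ultimately show ?thesis using IH(2) by (simp add: valid_Cons)
  qed
  have w: "(Z, False, r) # D' = x # N \<longrightarrow> k = wt (x # N) * d"
  proof
    assume "(Z, False, r) # D' = x # N"
    then have "r = 0" "D' = N" using x by auto
    then have "k = wt N * k''" "k'' = ee p q Z * d" using IH(5) by (auto simp: d_def r_def)
    then show "k = wt (x # N) * d" using x by simp
  qed
  show ?case
    by (rule exI[of _ d], rule exI[of _ "(Z, False, r) # D'"])
      (use eq v w IH(3,4) x in auto)
qed

lemma wt_pos: "\<forall>x\<in>set P. fst x \<noteq> A \<Longrightarrow> wt P > 0"
  by (induction P) (auto simp: ee_pos)

lemma wt_gt1: "P \<noteq> [] \<Longrightarrow> wt P > 1"
proof (induction P)
  case Nil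
  then show ?case by simp
next
  case (Cons x P)
  have "wt P \<ge> 1"
  proof (cases "P = []")
    case False
    then show ?thesis using Cons.IH by simp
  qed simp
  then have "ee p q (fst x) * wt P \<ge> 2 * 1" using ee_ge2[of "fst x"]
    by (intro mult_mono) auto
  then show ?case by simp
qed

lemma cls_nfw_pow: "cls p q (nfw (concat (replicate n P))) = cls p q (nfw P) [^]\<^bsub>GG\<^esub> n"
proof (induction n)
  case 0
  then show ?case by (simp add: cls_Nil)
next
  case (Suc n)
  have "cls p q (nfw (concat (replicate (Suc n) P))) = cls p q (nfw P) \<cdot> cls p q (nfw (concat (replicate n P)))"
    by (simp add: cls_app)
  also have "\<dots> = cls p q (nfw P) [^]\<^bsub>GG\<^esub> Suc n"
    by (simp add: Suc G.nat_pow_mult G.nat_pow_Suc2[symmetric])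
  finally show ?case .
qed

end


definition Hl :: "gen \<Rightarrow> gen \<Rightarrow> nat \<Rightarrow> item list" where
  "Hl X Y i = (X, True, 0) # replicate i (Y, True, 0)"

definition Cl :: "gen \<Rightarrow> gen \<Rightarrow> nat \<Rightarrow> item list" where
  "Cl X Y i = replicate i (Y, False, 0) @ [(X, False, 0)]"

lemma length_Hl [simp]: "length (Hl X Y i) = Suc i" by (simp add: Hl_def)
lemma length_Cl [simp]: "length (Cl X Y i) = Suc i" by (simp add: Cl_def)

lemma borderH:
  assumes "0 < j" "j < Suc i" "X \<noteq> Y"
  shows "take j (Hl X Y i) \<noteq> drop (Suc i - j) (Hl X Y i)"
proof
  assume eq: "take j (Hl X Y i) = drop (Suc i - j) (Hl X Y i)"
  have "hd (take j (Hl X Y i)) = (X, True, 0)" using assms by (cases j) (auto simp: Hl_def)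
  moreover have "drop (Suc i - j) (Hl X Y i) = replicate j (Y, True, 0)"
  proof -
    have "Suc i - j = Suc (i - j)" using assms by simp
    then show ?thesis using assms by (simp add: Hl_def)
  qed
  ultimately have "(X, True, (0::int)) = hd (replicate j (Y, True, (0::int)))"
    using eq by metis
  then show False using assms by (cases j) auto
qed

lemma borderC:
  assumes "0 < j" "j < Suc i" "X \<noteq> Y" "map fst D = map fst (Cl X Y i)"
  shows "take j D \<noteq> drop (Suc i - j) (Cl X Y i)"
proof
  assume eq: "take j D = drop (Suc i - j) (Cl X Y i)"
  have mD: "map fst D = replicate i Y @ [X]" using assms(4) by (simp add: Cl_def)
  have "map fst (take j D) = take j (map fst D)" by (simp add: take_map)
  also have "\<dots> = replicate j Y" using mD assms by simp
  finally have l1: "last (map fst (take j D)) = Y" using assms by (cases j) auto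
  have "map fst (drop (Suc i - j) (Cl X Y i)) = drop (Suc i - j) (replicate i Y @ [X])"
    by (simp only: drop_map[symmetric]) (simp add: Cl_def)
  moreover have "last (drop (Suc i - j) (replicate i Y @ [X])) = X"
    using assms by (simp add: last_drop)
  ultimately have "last (map fst (drop (Suc i - j) (Cl X Y i))) = X" by simp
  then show False using eq l1 assms(3) by simp
qed

context primes2
begin

definition hh :: "gen \<Rightarrow> gen \<Rightarrow> nat \<Rightarrow> word set" where
  "hh X Y i = gZ X \<cdot> gZ Y [^]\<^bsub>GG\<^esub> i"

lemma hh_carr [simp]: "hh X Y i \<in> carrier GG" by (simp add: hh_def)

lemma cls_rep: "cls p q (replicate n l) = cls p q [l] [^]\<^bsub>GG\<^esub> n"
proof (induction n)
  case 0
  then show ?case by (simp add: cls_Nil)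
next
  case (Suc n)
  have "cls p q (replicate (Suc n) l) = cls p q [l] \<cdot> cls p q (replicate n l)"
    by (simp add: cls_Cons[of _ "replicate n l"])
  also have "\<dots> = cls p q [l] \<cdot> cls p q [l] [^]\<^bsub>GG\<^esub> n" using Suc by simp
  also have "\<dots> = cls p q [l] [^]\<^bsub>GG\<^esub> Suc n" by (metis G.nat_pow_Suc2 cls_carrier)
  finally show ?case .
qed

lemma nfw_rep0 [simp]: "nfw (replicate n (Z, b, 0)) = replicate n (Z, b)"
  by (induction n) auto

lemma nfw_Hl: "nfw (Hl X Y i) = (X, True) # replicate i (Y, True)"
  by (simp add: Hl_def)

lemma nfw_Cl: "nfw (Cl X Y i) = replicate i (Y, False) @ [(X, False)]"
  by (simp add: Cl_def)

lemma cls_Hl: "cls p q (nfw (Hl X Y i)) = hh X Y i"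
  by (simp add: nfw_Hl hh_def cls_Cons[of _ "replicate i (Y, True)"] cls_rep)

lemma cls_Cl: "cls p q (nfw (Cl X Y i)) = ginv (hh X Y i)"
proof -
  have "cls p q (nfw (Cl X Y i)) = ginv (gZ Y) [^]\<^bsub>GG\<^esub> i \<cdot> ginv (gZ X)"
    by (simp add: nfw_Cl cls_app cls_rep cls_neg)
  also have "\<dots> = ginv (gZ Y [^]\<^bsub>GG\<^esub> i) \<cdot> ginv (gZ X)" by (simp add: G.nat_pow_inv)
  also have "\<dots> = ginv (hh X Y i)" by (simp add: hh_def G.inv_mult_group)
  finally show ?thesis .
qed

lemma valid_rep: "okitem p q x \<Longrightarrow> okpair x x \<Longrightarrow> valid p q (replicate n x)"
proof (induction n)
  case (Suc n)
  then show ?case by (cases n) (auto simp: valid_Cons)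
qed simp

lemma valid_Hl: "X \<noteq> A \<Longrightarrow> Y \<noteq> A \<Longrightarrow> valid p q (Hl X Y i)"
proof -
  assume XY: "X \<noteq> A" "Y \<noteq> A"
  have "valid p q (replicate i (Y, True, 0))"
    using XY by (intro valid_rep) auto
  then show ?thesis using XY by (cases i) (auto simp: Hl_def valid_Cons)
qed

lemma valid_Cl: "X \<noteq> A \<Longrightarrow> Y \<noteq> A \<Longrightarrow> valid p q (Cl X Y i)"
proof -
  assume XY: "X \<noteq> A" "Y \<noteq> A"
  have "valid p q (replicate i (Y, False, 0))"
    using XY ee_pos[of Y] by (intro valid_rep) auto
  then show ?thesis using XY ee_pos[of X]
    by (cases "i = 0") (simp_all add: Cl_def valid_append)
qed

lemma witems_Hl: "witems (nfw (Hl X Y i)) = Hl X Y i"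
  by (simp add: nfw_Hl Hl_def witems_def)

lemma witems_Cl: "witems (nfw (Cl X Y i)) = Cl X Y i"
  by (simp add: nfw_Cl Cl_def witems_def)

lemma centralizer:
  assumes XY: "X \<noteq> A" "Y \<noteq> A" "X \<noteq> Y"
    and g: "g \<in> carrier GG" and comm: "g \<cdot> hh X Y i = hh X Y i \<cdot> g"
  shows "\<exists>n::int. g = hh X Y i [^]\<^bsub>GG\<^esub> n"
proof -
  obtain x where vx: "valid p q (snd x)" and gx: "g = elt x" using nf_exists[OF g] by blast
  obtain k L where x: "x = (k, L)" by fastforce
  have vL: "valid p q L" using vx x by simp
  let ?H = "Hl X Y i" and ?C = "Cl X Y i"
  show ?thesis
  proof (cases "L = [] \<or> fst (snd (hd L))")
    case True
    have l1: "hh X Y i \<cdot> g = elt (wt ?H * k, ?H @ L)" and v1: "valid p q (?H @ L)"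
      using lmul_posword[OF valid_Hl[OF XY(1,2)] _ vL True, where k=k] XY gx x cls_Hl
      by (auto simp: Hl_def)
    have wA: "\<forall>l\<in>set (nfw ?H). fst l \<noteq> A" using XY by (auto simp: nfw_Hl)
    obtain L' where L': "valid p q L'" "elt (k, L) \<cdot> cls p q (nfw ?H) = elt (k, L')"
      "L' = L @ ?H \<or> length L' < length L + length (nfw ?H)"
      using rmul_word[OF vL wA, where k=k] witems_Hl by auto
    have "elt (k, L') = elt (wt ?H * k, ?H @ L)"
      using L'(2) l1 comm gx x cls_Hl by simp
    then have eq: "(k, L') = (wt ?H * k, ?H @ L)"
      using elt_inj[of "(k, L')" "(wt ?H * k, ?H @ L)"] L'(1) v1 by simp
    then have "L' = L @ ?H" using L'(3) by (auto simp: nfw_Hl)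
    then have c: "?H @ L = L @ ?H" using eq by simp
    have "wt ?H > 1" by (rule wt_gt1) (simp add: Hl_def)
    then have k0: "k = 0" using eq by (metis mult_cancel_right1 order_less_irrefl prod.inject)
    obtain n where n: "L = concat (replicate n ?H)"
      using comm_list[OF c] borderH[OF _ _ XY(3)] by (auto simp: Hl_def)
    have "g = hh X Y i [^]\<^bsub>GG\<^esub> n"
      using gx x k0 n by (simp add: elt_eq cls_nfw_pow cls_Hl)
    then show ?thesis by (intro exI[of _ "int n"]) (simp add: int_pow_int)
  next
    case False
    then have Lne: "L \<noteq> []" and hdL: "L = [] \<or> \<not> fst (snd (hd L))" by auto
    have comm': "ginv (hh X Y i) \<cdot> g = g \<cdot> ginv (hh X Y i)"
    proof -
      have "ginv (hh X Y i) \<cdot> g = ginv (hh X Y i) \<cdot> (g \<cdot> hh X Y i) \<cdot> ginv (hh X Y i)"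
        using g by (simp add: G.m_assoc)
      also have "\<dots> = g \<cdot> ginv (hh X Y i)" using g by (simp add: comm G.m_assoc)
      finally show ?thesis .
    qed
    have nC: "\<forall>x\<in>set ?C. snd x = (False, 0) \<and> fst x \<noteq> A" using XY by (auto simp: Cl_def)
    obtain k' D where D: "cls p q (nfw ?C) \<cdot> elt (k, L) = elt (k', D @ L)" "valid p q (D @ L)"
      "map fst D = map fst ?C" "D = ?C \<longrightarrow> k = wt ?C * k'"
      using lmul_negword[OF nC vL hdL, where k=k] by blast
    have wA: "\<forall>l\<in>set (nfw ?C). fst l \<noteq> A" using XY by (auto simp: nfw_Cl)
    obtain L' where L': "valid p q L'" "elt (k, L) \<cdot> cls p q (nfw ?C) = elt (k, L')"
      "L' = L @ ?C \<or> length L' < length L + length (nfw ?C)"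
      using rmul_word[OF vL wA, where k=k] witems_Cl by auto
    have "elt (k, L') = elt (k', D @ L)"
      using L'(2) D(1) comm' gx x cls_Cl by simp
    then have eq: "(k, L') = (k', D @ L)"
      using elt_inj[of "(k, L')" "(k', D @ L)"] L'(1) D(2) by simp
    have lD: "length D = length ?C" using D(3) by (metis length_map)
    then have "L' = L @ ?C" using L'(3) eq by (auto simp: nfw_Cl)
    then have c: "D @ L = L @ ?C" using eq by simp
    have Dne: "D \<noteq> []" using lD by auto
    obtain n where n: "L = concat (replicate n D)" and nD: "0 < n \<longrightarrow> D = ?C"
      using comm_list[OF c lD Dne] borderC[OF _ _ XY(3) D(3)] lD by auto
    have "n > 0" using n Lne by (cases n) auto
    then have DC: "D = ?C" using nD by simp
    have "wt ?C > 1" by (rule wt_gt1) (simp add: Cl_def)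
    moreover have "k = wt ?C * k" using D(4) DC eq by simp
    ultimately have k0: "k = 0" by (metis mult_cancel_right1 order_less_irrefl)
    have "g = ginv (hh X Y i) [^]\<^bsub>GG\<^esub> n"
      using gx x k0 n DC by (simp add: elt_eq cls_nfw_pow cls_Cl)
    also have "\<dots> = hh X Y i [^]\<^bsub>GG\<^esub> (- int n)"
      by (simp add: G.int_pow_neg_int G.nat_pow_inv)
    finally show ?thesis by blast
  qed
qed

end


lemma valid_allpos:
  "(\<forall>x\<in>set L. okitem p q x \<and> fst (snd x)) \<Longrightarrow> valid p q L"
proof (induction L)
  case (Cons x L)
  then show ?case by (cases L; cases x) (auto simp: valid_Cons)
qed simp

lemma valid_allneg:
  "(\<forall>x\<in>set L. okitem p q x \<and> \<not> fst (snd x)) \<Longrightarrow> valid p q L"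
proof (induction L)
  case (Cons x L)
  then show ?case by (cases L; cases x) (auto simp: valid_Cons)
qed simp

lemma rot_concat: "[a] @ concat (replicate n (B @ [a])) = concat (replicate n ([a] @ B)) @ [a]"
  by (induction n) auto

context primes2
begin

lemma conj_iter:
  assumes c: "c \<in> carrier GG" and h: "\<And>k::int. c \<cdot> aa [^]\<^bsub>GG\<^esub> k \<cdot> ginv c = aa [^]\<^bsub>GG\<^esub> (w * k)"
  shows "c [^]\<^bsub>GG\<^esub> (n::nat) \<cdot> aa [^]\<^bsub>GG\<^esub> (k::int) \<cdot> ginv (c [^]\<^bsub>GG\<^esub> n) = aa [^]\<^bsub>GG\<^esub> (w ^ n * k)"
proof (induction n arbitrary: k)
  case 0
  then show ?case by simp
next
  case (Suc n)
  have "c [^]\<^bsub>GG\<^esub> Suc n \<cdot> aa [^]\<^bsub>GG\<^esub> k \<cdot> ginv (c [^]\<^bsub>GG\<^esub> Suc n)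
      = c [^]\<^bsub>GG\<^esub> n \<cdot> (c \<cdot> aa [^]\<^bsub>GG\<^esub> k \<cdot> ginv c) \<cdot> ginv (c [^]\<^bsub>GG\<^esub> n)"
    using c by (simp add: G.m_assoc G.inv_mult_group)
  also have "\<dots> = aa [^]\<^bsub>GG\<^esub> (w ^ n * (w * k))" by (simp add: h Suc)
  finally show ?case by (simp add: mult.assoc mult.commute mult.left_commute)
qed

lemma conjY_pow:
  assumes "Y \<noteq> A"
  shows "gZ Y [^]\<^bsub>GG\<^esub> (i::nat) \<cdot> aa [^]\<^bsub>GG\<^esub> (k::int) \<cdot> ginv (gZ Y [^]\<^bsub>GG\<^esub> i)
       = aa [^]\<^bsub>GG\<^esub> (ee p q Y ^ i * k)"
  by (rule conj_iter) (simp_all add: conjZ[OF assms])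

lemma conj_hh:
  assumes "X \<noteq> A" "Y \<noteq> A"
  shows "hh X Y i \<cdot> aa [^]\<^bsub>GG\<^esub> (k::int) \<cdot> ginv (hh X Y i)
       = aa [^]\<^bsub>GG\<^esub> (ee p q X * ee p q Y ^ i * k)"
proof -
  have "hh X Y i \<cdot> aa [^]\<^bsub>GG\<^esub> k \<cdot> ginv (hh X Y i)
      = gZ X \<cdot> (gZ Y [^]\<^bsub>GG\<^esub> i \<cdot> aa [^]\<^bsub>GG\<^esub> k \<cdot> ginv (gZ Y [^]\<^bsub>GG\<^esub> i)) \<cdot> ginv (gZ X)"
    by (simp add: hh_def G.m_assoc G.inv_mult_group)
  also have "\<dots> = aa [^]\<^bsub>GG\<^esub> (ee p q X * (ee p q Y ^ i * k))"
    by (simp add: conjY_pow[OF assms(2)] conjZ[OF assms(1)])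
  finally show ?thesis by (simp add: mult.assoc)
qed

lemma conj_hh_pow:
  assumes "X \<noteq> A" "Y \<noteq> A"
  shows "hh X Y i [^]\<^bsub>GG\<^esub> (n::nat) \<cdot> aa \<cdot> ginv (hh X Y i [^]\<^bsub>GG\<^esub> n)
       = aa [^]\<^bsub>GG\<^esub> ((ee p q X * ee p q Y ^ i) ^ n)"
  using conj_iter[OF hh_carr[of X Y i] conj_hh[OF assms, of i], of n 1] by simp

definition test :: "gen \<Rightarrow> word set \<Rightarrow> bool" where
  "test Y g \<longleftrightarrow> gZ Y \<cdot> g \<cdot> aa \<cdot> ginv g \<cdot> ginv (gZ Y) = g \<cdot> aa [^]\<^bsub>GG\<^esub> (ee p q Y) \<cdot> ginv g"

lemma test_pos:
  assumes "X \<noteq> A" "Y \<noteq> A"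
  shows "test Y (hh X Y i [^]\<^bsub>GG\<^esub> (n::nat))"
proof -
  let ?g = "hh X Y i [^]\<^bsub>GG\<^esub> n"
  let ?M = "(ee p q X * ee p q Y ^ i) ^ n"
  have "gZ Y \<cdot> ?g \<cdot> aa \<cdot> ginv ?g \<cdot> ginv (gZ Y) = gZ Y \<cdot> (?g \<cdot> aa \<cdot> ginv ?g) \<cdot> ginv (gZ Y)"
    by (simp add: G.m_assoc)
  also have "\<dots> = aa [^]\<^bsub>GG\<^esub> (ee p q Y * ?M)"
    by (simp add: conj_hh_pow[OF assms] conjZ[OF assms(2)])
  also have "\<dots> = (aa [^]\<^bsub>GG\<^esub> ?M) [^]\<^bsub>GG\<^esub> (ee p q Y)"
    by (simp add: G.int_pow_pow mult.commute)
  also have "\<dots> = (?g \<cdot> aa \<cdot> ginv ?g) [^]\<^bsub>GG\<^esub> (ee p q Y)"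
    by (simp add: conj_hh_pow[OF assms])
  also have "\<dots> = ?g \<cdot> aa [^]\<^bsub>GG\<^esub> (ee p q Y) \<cdot> ginv ?g"
    by (rule G.conj_int_pow[symmetric]) simp_all
  finally show ?thesis by (simp add: test_def)
qed

end


context primes2
begin

definition CC :: "gen \<Rightarrow> gen \<Rightarrow> nat \<Rightarrow> item list" where
  "CC X Y i = [(X, False, 0)] @ replicate i (Y, False, 0)"

definition U0 :: "gen \<Rightarrow> gen \<Rightarrow> nat \<Rightarrow> nat \<Rightarrow> item list" where
  "U0 X Y i m' = concat (replicate m' (Hl X Y i)) @ [(X, True, 0), (Y, True, 0)] @ concat (replicate m' (CC X Y i))"

lemma valid_U0:
  assumes "X \<noteq> A" "Y \<noteq> A" "X \<noteq> Y" "0 \<le> c" "c \<le> 1"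
  shows "valid p q (U0 X Y i m' @ [(X, False, c)])"
proof -
  let ?P = "concat (replicate m' (Hl X Y i)) @ [(X, True, 0), (Y, True, 0)]"
  let ?N = "concat (replicate m' (CC X Y i)) @ [(X, False, c)]"
  have eq: "U0 X Y i m' @ [(X, False, c)] = ?P @ ?N" by (simp add: U0_def)
  have vP: "valid p q ?P" using assms by (intro valid_allpos) (auto simp: Hl_def)
  have "c < ee p q X" using assms ee_ge2[of X] by simp
  then have vN: "valid p q ?N" using assms ee_pos[of X] ee_pos[of Y]
    by (intro valid_allneg) (auto simp: CC_def)
  have lP: "last ?P = (Y, True, 0)" by simp
  have hN: "fst (hd ?N) = X \<and> \<not> fst (snd (hd ?N))"
    by (cases m') (simp_all add: CC_def)
  obtain Z b d where hd: "hd ?N = (Z, b, d)" by (cases "hd ?N")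
  have okp: "okpair (last ?P) (hd ?N)" using lP hN hd assms(3) by auto
  have "valid p q (?P @ ?N)"
    unfolding valid_append[of p q ?P ?N] using vP vN okp by blast
  then show ?thesis by (simp only: eq)
qed

lemma nfw_U0: "nfw (U0 X Y i m' @ [(X, False, 0)]) =
   nfw (concat (replicate m' (Hl X Y i))) @ [(X, True), (Y, True), (X, False)] @ nfw (concat (replicate m' (Cl X Y i)))"
proof -
  have r: "[(X, False, 0)] @ concat (replicate m' (Cl X Y i)) = concat (replicate m' (CC X Y i)) @ [(X, False, 0)]"
    unfolding CC_def Cl_def by (rule rot_concat)
  have "concat (replicate m' (CC X Y i)) @ [(X, False, 0)] = [(X, False, 0)] @ concat (replicate m' (Cl X Y i))"
    by (rule r[symmetric])
  then have "U0 X Y i m' @ [(X, False, 0)] =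
     concat (replicate m' (Hl X Y i)) @ [(X, True, 0), (Y, True, 0), (X, False, 0)] @ concat (replicate m' (Cl X Y i))"
    by (simp add: U0_def)
  then show ?thesis by simp
qed

lemma hh_conjY:
  assumes "Y \<noteq> A"
  shows "hh X Y i \<cdot> gZ Y \<cdot> ginv (hh X Y i) = gZ X \<cdot> gZ Y \<cdot> ginv (gZ X)"
proof -
  have c: "gZ Y [^]\<^bsub>GG\<^esub> i \<cdot> gZ Y = gZ Y \<cdot> gZ Y [^]\<^bsub>GG\<^esub> i"
    by (metis G.nat_pow_Suc G.nat_pow_Suc2 gZ_carr)
  have "hh X Y i \<cdot> gZ Y \<cdot> ginv (hh X Y i) = gZ X \<cdot> (gZ Y [^]\<^bsub>GG\<^esub> i \<cdot> gZ Y) \<cdot> ginv (gZ Y [^]\<^bsub>GG\<^esub> i) \<cdot> ginv (gZ X)"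
    by (simp add: hh_def G.m_assoc G.inv_mult_group)
  also have "\<dots> = gZ X \<cdot> gZ Y \<cdot> ginv (gZ X)"
    by (simp only: c) (simp add: G.m_assoc)
  finally show ?thesis .
qed

lemma elt_U0:
  assumes "Y \<noteq> A"
  shows "elt (0, U0 X Y i m' @ [(X, False, 0)]) =
     hh X Y i [^]\<^bsub>GG\<^esub> Suc m' \<cdot> gZ Y \<cdot> ginv (hh X Y i [^]\<^bsub>GG\<^esub> Suc m')"
proof -
  let ?h = "hh X Y i" and ?hm = "hh X Y i [^]\<^bsub>GG\<^esub> m'"
  have d: "\<And>B C. cls p q (B @ [(X, True), (Y, True), (X, False)] @ C)
      = cls p q B \<cdot> (gZ X \<cdot> gZ Y \<cdot> ginv (gZ X)) \<cdot> cls p q C"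
    by (simp add: cls_app[symmetric] cls_neg[symmetric])
  have "elt (0, U0 X Y i m' @ [(X, False, 0)]) = ?hm \<cdot> (gZ X \<cdot> gZ Y \<cdot> ginv (gZ X)) \<cdot> ginv ?hm"
    unfolding elt_eq nfw_U0 d by (simp add: cls_nfw_pow cls_Hl cls_Cl G.nat_pow_inv)
  also have "\<dots> = ?hm \<cdot> (?h \<cdot> gZ Y \<cdot> ginv ?h) \<cdot> ginv ?hm" by (simp only: hh_conjY[OF assms])
  also have "\<dots> = (?hm \<cdot> ?h) \<cdot> gZ Y \<cdot> ginv (?hm \<cdot> ?h)"
    by (simp add: G.m_assoc G.inv_mult_group)
  finally show ?thesis by simp
qed

lemma test_neg:
  assumes XY: "X \<noteq> A" "Y \<noteq> A" "X \<noteq> Y"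
  shows "\<not> test Y (ginv (hh X Y i [^]\<^bsub>GG\<^esub> Suc m'))"
proof
  let ?hm = "hh X Y i [^]\<^bsub>GG\<^esub> Suc m'"
  let ?g = "ginv ?hm"
  let ?u = "?hm \<cdot> gZ Y \<cdot> ginv ?hm"
  let ?e = "aa [^]\<^bsub>GG\<^esub> (ee p q Y)"
  assume "test Y ?g"
  then have t: "gZ Y \<cdot> ?g \<cdot> aa \<cdot> ginv ?g \<cdot> ginv (gZ Y) = ?g \<cdot> ?e \<cdot> ginv ?g"
    by (simp add: test_def)
  have "?u \<cdot> aa \<cdot> ginv ?u = ?hm \<cdot> (gZ Y \<cdot> ?g \<cdot> aa \<cdot> ginv ?g \<cdot> ginv (gZ Y)) \<cdot> ginv ?hm"
    by (simp add: G.m_assoc G.inv_mult_group)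
  also have "\<dots> = ?hm \<cdot> (?g \<cdot> ?e \<cdot> ginv ?g) \<cdot> ginv ?hm" by (simp only: t)
  also have "\<dots> = ?e" by (simp add: G.m_assoc)
  finally have "?u \<cdot> aa \<cdot> ginv ?u = ?e" .
  then have ua: "?u \<cdot> aa = ?e \<cdot> ?u"
    by (metis G.inv_solve_right G.m_closed G.inv_closed aa_carr hh_carr G.nat_pow_closed gZ_carr apow_carr)
  have u: "elt (0, U0 X Y i m' @ [(X, False, 0)]) = ?u" by (rule elt_U0[OF XY(2)])
  have "elt (0, U0 X Y i m' @ [(X, False, 1)]) = elt (0, U0 X Y i m' @ [(X, False, 0)]) \<cdot> aa"
    by (simp add: elt_eq cls_app cls_Cons[of _ "[_]"] cls_neg G.m_assoc)
  also have "\<dots> = ?e \<cdot> elt (0, U0 X Y i m' @ [(X, False, 0)])" by (simp only: u ua)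
  also have "\<dots> = elt (ee p q Y, U0 X Y i m' @ [(X, False, 0)])" by (simp add: elt_eq)
  finally have "(0::int, U0 X Y i m' @ [(X, False, 1)]) = (ee p q Y, U0 X Y i m' @ [(X, False, 0)])"
    using elt_inj[of "(0, U0 X Y i m' @ [(X, False, 1)])" "(ee p q Y, U0 X Y i m' @ [(X, False, 0)])"]
      valid_U0[OF XY, of 1 i m'] valid_U0[OF XY, of 0 i m'] by simp
  then show False using ee_pos[of Y] by simp
qed

end


lemma mon_gen_single:
  fixes G (structure)
  assumes "group G" "c \<in> carrier G"
  shows "mon_gen G {c} = {c [^]\<^bsub>G\<^esub> (n::nat) | n. True}"
proof
  interpret group G by fact
  show "mon_gen G {c} \<subseteq> {c [^] (n::nat) | n. True}"
  proof
    fix x assume "x \<in> mon_gen G {c}"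
    then show "x \<in> {c [^] (n::nat) | n. True}"
    proof (induction rule: mon_gen.induct)
      case one
      then show ?case by (intro CollectI exI[of _ 0]) simp
    next
      case (gen x)
      then show ?case using assms(2) by (intro CollectI exI[of _ 1]) simp
    next
      case (mult x y)
      then obtain a b where "x = c [^] (a::nat)" "y = c [^] (b::nat)" by auto
      then show ?case using assms(2) by (intro CollectI exI[of _ "a + b"]) (simp add: nat_pow_mult)
    qed
  qed
next
  interpret group G by fact
  show "{c [^] (n::nat) | n. True} \<subseteq> mon_gen G {c}"
  proof
    fix x assume "x \<in> {c [^] (n::nat) | n. True}"
    then obtain n where x: "x = c [^] (n::nat)" by auto
    have "c [^] (n::nat) \<in> mon_gen G {c}"
    proof (induction n)
      case 0
      then show ?case using mon_gen.one[of G "{c}"] by simp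
    next
      case (Suc n)
      then show ?case using mon_gen.mult[OF Suc mon_gen.gen[of c "{c}" G]] by simp
    qed
    then show "x \<in> mon_gen G {c}" using x by simp
  qed
qed

context primes2
begin

lemma mon_hh:
  assumes XY: "X \<noteq> A" "Y \<noteq> A" "X \<noteq> Y" and g: "g \<in> carrier GG"
  shows "(g \<cdot> hh X Y i = hh X Y i \<cdot> g \<and> test Y g) \<longleftrightarrow> (\<exists>n::nat. g = hh X Y i [^]\<^bsub>GG\<^esub> n)"
proof
  assume h: "g \<cdot> hh X Y i = hh X Y i \<cdot> g \<and> test Y g"
  obtain n :: int where n: "g = hh X Y i [^]\<^bsub>GG\<^esub> n"
    using centralizer[OF XY g] h by blast
  show "\<exists>n::nat. g = hh X Y i [^]\<^bsub>GG\<^esub> n"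
  proof (cases "n \<ge> 0")
    case True
    then show ?thesis using n by (intro exI[of _ "nat n"]) (simp add: pow_nat)
  next
    case False
    then obtain m' where m: "nat (- n) = Suc m'" by (cases "nat (- n)") auto
    have "g = ginv (hh X Y i [^]\<^bsub>GG\<^esub> nat (- n))"
      using n False by (simp add: int_pow_def2 del: pow_nat)
    then have "g = ginv (hh X Y i [^]\<^bsub>GG\<^esub> Suc m')" using m by simp
    then show ?thesis using test_neg[OF XY, of i m'] h by simp
  qed
next
  assume "\<exists>n::nat. g = hh X Y i [^]\<^bsub>GG\<^esub> n"
  then obtain n :: nat where n: "g = hh X Y i [^]\<^bsub>GG\<^esub> n" by blast
  have "g \<cdot> hh X Y i = hh X Y i \<cdot> g"
    using n by (metis G.nat_pow_Suc G.nat_pow_Suc2 hh_carr)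
  then show "g \<cdot> hh X Y i = hh X Y i \<cdot> g \<and> test Y g"
    using n test_pos[OF XY(1,2)] by simp
qed

lemma hh0: "hh X Y 0 = gZ X" by (simp add: hh_def)

lemma mon_gen_hh:
  "mon_gen GG {hh X Y i} = {hh X Y i [^]\<^bsub>GG\<^esub> (n::nat) | n. True}"
  by (rule mon_gen_single) (simp_all add: gpres_group)

end


lemma expsum_word_Nil [simp]: "expsum_word x [] = 0"
  by (simp add: expsum_word_def)

lemma expsum_word_Cons [simp]:
  "expsum_word x (l # w) = (if fst l = x then (if snd l then 1 else -1) else 0) + expsum_word x w"
  by (simp add: expsum_word_def)

lemma expsum_word_append [simp]: "expsum_word x (u @ v) = expsum_word x u + expsum_word x v"
  by (induction u) auto

lemma expsum_word_repA [simp]: "x \<noteq> A \<Longrightarrow> expsum_word x (replicate n (A, b)) = 0"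
  by (induction n) auto

lemma expsum_red:
  assumes "x \<noteq> A" "red_step p q u v"
  shows "expsum_word x u = expsum_word x v"
proof -
  from assms(2) obtain a b r where uv: "u = a @ r @ b" "v = a @ b"
    "r \<in> relators p q \<or> (\<exists>g c. r = [(g, c), (g, \<not> c)])"
    unfolding red_step_def by blast
  have "expsum_word x r = 0"
    using uv(3) assms(1) by (auto simp: relators_def)
  then show ?thesis using uv by simp
qed

lemma expsum_weq:
  assumes "x \<noteq> A" "weq p q u v"
  shows "expsum_word x u = expsum_word x v"
  using assms(2) unfolding weq_def
proof (induction rule: equivclp_induct)
  case base
  then show ?case by simp
next
  case (step y z)
  then show ?case using expsum_red[OF assms(1)] by metis
qed

lemma expsum_cls:
  assumes "x \<noteq> A"
  shows "expsum x (cls p q w) = expsum_word x w"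
proof -
  have "(SOME v. v \<in> cls p q w) \<in> cls p q w" by (rule someI[of _ w]) simp
  then have "weq p q w (SOME v. v \<in> cls p q w)" by (simp add: cls_def)
  then show ?thesis unfolding expsum_def using expsum_weq[OF assms] by metis
qed

lemma pq_unique_nat:
  fixes p q :: nat
  assumes "prime p" "prime q" "p \<noteq> q" "p ^ a * q ^ b = p ^ c * q ^ d"
  shows "a = c"
proof (rule ccontr)
  assume ne: "a \<noteq> c"
  {
    fix a b c d :: nat
    assume lt: "a < c" and eq: "p ^ a * q ^ b = p ^ c * q ^ d"
    have "p ^ c = p ^ a * p ^ (c - a)" using lt by (simp add: power_add[symmetric])
    then have "p ^ a * q ^ b = p ^ a * (p ^ (c - a) * q ^ d)" using eq by (simp add: mult.assoc)
    then have "q ^ b = p ^ (c - a) * q ^ d" using assms(1) by (simp add: prime_gt_0_nat)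
    then have "p dvd q ^ b" using lt by (simp add: dvd_power)
    then have "p dvd q" using assms(1) prime_dvd_power by blast
    then have False using assms by (simp add: primes_dvd_imp_eq)
  }
  note * = this
  show False
  proof (cases "a < c")
    case True
    show ?thesis by (rule *[OF True assms(4)])
  next
    case False
    then have "c < a" using ne by simp
    then show ?thesis using *[of c a d b] assms(4) by simp
  qed
qed

lemma pq_unique:
  fixes p q :: nat
  assumes "prime p" "prime q" "p \<noteq> q" "int p ^ a * int q ^ b = int p ^ c * int q ^ d"
  shows "a = c" "b = d"
proof -
  have n: "p ^ a * q ^ b = p ^ c * q ^ d" using assms(4) by (metis of_nat_eq_iff of_nat_mult of_nat_power)
  show "a = c" by (rule pq_unique_nat[OF assms(1-3) n])
  show "b = d" by (rule pq_unique_nat[OF assms(2,1)]) (use assms(3) n in \<open>auto simp: mult.commute\<close>)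
qed

context primes2
begin

lemma expsum_mult:
  assumes "x \<noteq> A" "g \<in> carrier GG" "h \<in> carrier GG"
  shows "expsum x (g \<cdot> h) = expsum x g + expsum x h"
proof -
  obtain u v where "g = cls p q u" "h = cls p q v" using assms by (auto simp: carrier_Gpres)
  then show ?thesis using assms(1) by (simp add: mult_cls expsum_cls)
qed

lemma expsum_one [simp]: "x \<noteq> A \<Longrightarrow> expsum x gone = 0"
  by (simp add: one_cls expsum_cls)

lemma aa_pow_inj:
  assumes "aa [^]\<^bsub>GG\<^esub> (a::int) = aa [^]\<^bsub>GG\<^esub> (b::int)"
  shows "a = b"
proof -
  have "elt (a, []) = elt (b, [])" using assms by (simp add: elt_eq cls_Nil)
  then show ?thesis using elt_inj[of "(a, [])" "(b, [])"] by simp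
qed

lemma mon_gen_carr:
  assumes "x \<in> mon_gen GG X" "X \<subseteq> carrier GG"
  shows "x \<in> carrier GG"
  using assms by (induction rule: mon_gen.induct) auto

lemma mon_st:
  assumes "g \<in> mon_gen GG {gZ S, gZ T}"
  shows "\<exists>m n :: nat. expsum S g = int m \<and> expsum T g = int n \<and>
           g \<cdot> aa \<cdot> ginv g = aa [^]\<^bsub>GG\<^esub> (ee p q S ^ m * ee p q T ^ n)"
  using assms
proof (induction rule: mon_gen.induct)
  case one
  then show ?case by (intro exI[of _ 0] exI[of _ 0]) simp
next
  case (gen x)
  have cS: "gZ S \<cdot> aa \<cdot> ginv (gZ S) = aa [^]\<^bsub>GG\<^esub> (ee p q S ^ 1 * ee p q T ^ 0)"
    using relZ[of S] by simp
  have eS: "expsum S (gZ S) = int 1" "expsum T (gZ S) = int 0" by (simp_all add: expsum_cls)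
  have cT: "gZ T \<cdot> aa \<cdot> ginv (gZ T) = aa [^]\<^bsub>GG\<^esub> (ee p q S ^ 0 * ee p q T ^ 1)"
    using relZ[of T] by simp
  have eT: "expsum S (gZ T) = int 0" "expsum T (gZ T) = int 1" by (simp_all add: expsum_cls)
  from gen have "x = gZ S \<or> x = gZ T" by blast
  then show ?case
  proof
    assume x: "x = gZ S"
    show ?thesis unfolding x
      by (rule exI[where x="1::nat"], rule exI[where x="0::nat"], intro conjI, fact eS(1), fact eS(2), fact cS)
  next
    assume x: "x = gZ T"
    show ?thesis unfolding x
      by (rule exI[where x="0::nat"], rule exI[where x="1::nat"], intro conjI, fact eT(1), fact eT(2), fact cT)
  qed
next
  case (mult x y)
  have xc: "x \<in> carrier GG" and yc: "y \<in> carrier GG"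
    using mult.hyps mon_gen_carr[where X="{gZ S, gZ T}"] by auto
  from mult.IH obtain m1 n1 m2 n2 :: nat where
    h1: "expsum S x = int m1" "expsum T x = int n1" "x \<cdot> aa \<cdot> ginv x = aa [^]\<^bsub>GG\<^esub> (ee p q S ^ m1 * ee p q T ^ n1)" and
    h2: "expsum S y = int m2" "expsum T y = int n2" "y \<cdot> aa \<cdot> ginv y = aa [^]\<^bsub>GG\<^esub> (ee p q S ^ m2 * ee p q T ^ n2)"
    by blast
  have "x \<cdot> y \<cdot> aa \<cdot> ginv (x \<cdot> y) = x \<cdot> (y \<cdot> aa \<cdot> ginv y) \<cdot> ginv x"
    using xc yc by (simp add: G.m_assoc G.inv_mult_group)
  also have "\<dots> = (x \<cdot> aa \<cdot> ginv x) [^]\<^bsub>GG\<^esub> (ee p q S ^ m2 * ee p q T ^ n2)"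
    using xc by (simp only: h2(3)) (rule G.conj_int_pow, simp_all)
  also have "\<dots> = aa [^]\<^bsub>GG\<^esub> (ee p q S ^ (m1 + m2) * ee p q T ^ (n1 + n2))"
    by (simp add: h1(3) G.int_pow_pow power_add mult_ac)
  finally show ?case using h1 h2 xc yc
    by (intro exI[of _ "m1 + m2"] exI[of _ "n1 + n2"]) (simp add: expsum_mult)
qed

end


fun inv_letter :: "nat \<Rightarrow> nat \<Rightarrow> 'v eqletter \<Rightarrow> 'v eqletter" where
  "inv_letter p q (Cst c) = Cst (inv\<^bsub>Gpres p q\<^esub> c)"
| "inv_letter p q (Var v) = InvVar v"
| "inv_letter p q (InvVar v) = Var v"

definition inv_eq :: "nat \<Rightarrow> nat \<Rightarrow> 'v equation \<Rightarrow> 'v equation" where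
  "inv_eq p q w = rev (map (inv_letter p q) w)"

definition eqn :: "nat \<Rightarrow> nat \<Rightarrow> 'v equation \<Rightarrow> 'v equation \<Rightarrow> 'v equation" where
  "eqn p q l r = l @ inv_eq p q r"

definition vars :: "'v equation \<Rightarrow> 'v set" where
  "vars w = {v. Var v \<in> set w \<or> InvVar v \<in> set w}"

lemma finite_vars: "finite (vars w)"
proof -
  have "vars w \<subseteq> (\<lambda>l. case l of Var v \<Rightarrow> v | InvVar v \<Rightarrow> v | Cst c \<Rightarrow> undefined) ` set w"
    unfolding vars_def by (force split: eqletter.splits)
  then show ?thesis by (rule finite_subset) simp
qed

lemma eval_eq_Nil [simp]: "eval_eq p q \<phi> [] = \<one>\<^bsub>Gpres p q\<^esub>"
  by (simp add: eval_eq_def)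

lemma eval_eq_Cons [simp]:
  "eval_eq p q \<phi> (l # w) = eval_letter p q \<phi> l \<otimes>\<^bsub>Gpres p q\<^esub> eval_eq p q \<phi> w"
  by (simp add: eval_eq_def)

lemma eval_rename: "eval_eq p q \<phi> (map (map_eqletter f) w) = eval_eq p q (\<phi> \<circ> f) w"
proof (induction w)
  case (Cons l w)
  then show ?case by (cases l) simp_all
qed simp

lemma consts_ok_rename: "consts_ok p q (map (map_eqletter f) w) = consts_ok p q w"
proof -
  have "\<And>g. Cst g \<in> set (map (map_eqletter f) w) \<longleftrightarrow> Cst g \<in> set w"
  proof
    fix g assume "Cst g \<in> set (map (map_eqletter f) w)"
    then obtain l where l: "l \<in> set w" "map_eqletter f l = Cst g" by auto
    have "l = Cst g" using l(2) by (cases l) auto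
    then show "Cst g \<in> set w" using l(1) by simp
  next
    fix g assume "Cst g \<in> set w"
    then show "Cst g \<in> set (map (map_eqletter f) w)" by force
  qed
  then show ?thesis by (simp add: consts_ok_def)
qed

lemma eval_cong:
  assumes "\<forall>v\<in>vars w. \<phi> v = \<phi>' v"
  shows "eval_eq p q \<phi> w = eval_eq p q \<phi>' w"
  using assms
proof (induction w)
  case (Cons l w)
  then have "eval_letter p q \<phi> l = eval_letter p q \<phi>' l"
    by (cases l) (auto simp: vars_def)
  moreover have "eval_eq p q \<phi> w = eval_eq p q \<phi>' w" using Cons by (auto simp: vars_def)
  ultimately show ?case by simp
qed simp

context primes2
begin

lemma eval_letter_carr:
  assumes "\<forall>v. \<phi> v \<in> carrier GG" "\<forall>c. l = Cst c \<longrightarrow> c \<in> carrier GG"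
  shows "eval_letter p q \<phi> l \<in> carrier GG"
  using assms by (cases l) auto

lemma eval_eq_carr:
  assumes "\<forall>v. \<phi> v \<in> carrier GG" "consts_ok p q w"
  shows "eval_eq p q \<phi> w \<in> carrier GG"
  using assms(2)
proof (induction w)
  case (Cons l w)
  have "consts_ok p q w" using Cons.prems by (simp add: consts_ok_def)
  moreover have "eval_letter p q \<phi> l \<in> carrier GG"
    using Cons.prems assms(1) by (intro eval_letter_carr) (auto simp: consts_ok_def)
  ultimately show ?case using Cons.IH by simp
qed simp

lemma consts_ok_append [simp]: "consts_ok p q (u @ v) \<longleftrightarrow> consts_ok p q u \<and> consts_ok p q v"
  by (auto simp: consts_ok_def)

lemma consts_ok_Cons [simp]: "consts_ok p q (l # v) \<longleftrightarrow> (\<forall>c. l = Cst c \<longrightarrow> c \<in> carrier GG) \<and> consts_ok p q v"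
  by (auto simp: consts_ok_def)

lemma consts_ok_Nil [simp]: "consts_ok p q []"
  by (simp add: consts_ok_def)

lemma eval_eq_append:
  assumes "\<forall>v. \<phi> v \<in> carrier GG" "consts_ok p q u" "consts_ok p q v"
  shows "eval_eq p q \<phi> (u @ v) = eval_eq p q \<phi> u \<cdot> eval_eq p q \<phi> v"
  using assms(2)
proof (induction u)
  case Nil
  then show ?case using eval_eq_carr[OF assms(1,3)] by simp
next
  case (Cons l u)
  have lc: "eval_letter p q \<phi> l \<in> carrier GG"
    using Cons.prems assms(1) by (intro eval_letter_carr) auto
  have "consts_ok p q u" using Cons.prems by simp
  then show ?case using Cons.IH lc eval_eq_carr[OF assms(1)] assms(3)
    by (simp add: G.m_assoc)
qed

lemma consts_ok_inv [simp]: "consts_ok p q w \<Longrightarrow> consts_ok p q (inv_eq p q w)"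
proof -
  assume w: "consts_ok p q w"
  have "\<And>g. Cst g \<in> set (inv_eq p q w) \<Longrightarrow> (\<exists>c. Cst c \<in> set w \<and> g = ginv c)"
  proof -
    fix g assume "Cst g \<in> set (inv_eq p q w)"
    then obtain l where l: "l \<in> set w" "inv_letter p q l = Cst g" by (auto simp: inv_eq_def)
    obtain c where "l = Cst c" "g = ginv c" using l(2) by (cases l) auto
    then show "\<exists>c. Cst c \<in> set w \<and> g = ginv c" using l(1) by blast
  qed
  then show ?thesis using w unfolding consts_ok_def by (metis G.inv_closed)
qed

lemma eval_inv_eq:
  assumes "\<forall>v. \<phi> v \<in> carrier GG" "consts_ok p q w"
  shows "eval_eq p q \<phi> (inv_eq p q w) = ginv (eval_eq p q \<phi> w)"
  using assms(2)
proof (induction w)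
  case Nil
  then show ?case by (simp add: inv_eq_def)
next
  case (Cons l w)
  have lc: "eval_letter p q \<phi> l \<in> carrier GG"
    using Cons.prems assms(1) by (intro eval_letter_carr) auto
  have cw: "consts_ok p q w" using Cons.prems by simp
  have il: "eval_letter p q \<phi> (inv_letter p q l) = ginv (eval_letter p q \<phi> l)"
    using Cons.prems assms(1) by (cases l) auto
  have "eval_eq p q \<phi> (inv_eq p q (l # w)) = eval_eq p q \<phi> (inv_eq p q w @ [inv_letter p q l])"
    by (simp add: inv_eq_def)
  also have "\<dots> = eval_eq p q \<phi> (inv_eq p q w) \<cdot> eval_eq p q \<phi> [inv_letter p q l]"
  proof -
    have c1: "consts_ok p q (inv_eq p q w)" using cw by simp
    have "consts_ok p q [l]" using Cons.prems by simp
    then have c2: "consts_ok p q [inv_letter p q l]" using consts_ok_inv[of "[l]"] by (simp add: inv_eq_def)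
    show ?thesis by (rule eval_eq_append[OF assms(1) c1 c2])
  qed
  also have "\<dots> = ginv (eval_eq p q \<phi> w) \<cdot> ginv (eval_letter p q \<phi> l)"
    using Cons.IH[OF cw] il lc by simp
  also have "\<dots> = ginv (eval_eq p q \<phi> (l # w))"
    using lc eval_eq_carr[OF assms(1) cw] by (simp add: G.inv_mult_group)
  finally show ?case .
qed

lemma eqn_iff:
  assumes "\<forall>v. \<phi> v \<in> carrier GG" "consts_ok p q l" "consts_ok p q r"
  shows "eval_eq p q \<phi> (eqn p q l r) = gone \<longleftrightarrow> eval_eq p q \<phi> l = eval_eq p q \<phi> r"
proof -
  have "eval_eq p q \<phi> (eqn p q l r) = eval_eq p q \<phi> l \<cdot> ginv (eval_eq p q \<phi> r)"
    unfolding eqn_def using assms by (simp add: eval_eq_append[OF assms(1)] eval_inv_eq)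
  moreover have "eval_eq p q \<phi> l \<in> carrier GG" "eval_eq p q \<phi> r \<in> carrier GG"
    using eval_eq_carr assms by auto
  ultimately show ?thesis
    using G.mult_inv_one_eq by auto
qed

lemma consts_ok_eqn [simp]: "consts_ok p q l \<Longrightarrow> consts_ok p q r \<Longrightarrow> consts_ok p q (eqn p q l r)"
  by (simp add: eqn_def)

end


context primes2
begin

lemma defI:
  fixes E :: "nat equation list"
  assumes "\<forall>f\<in>set E. consts_ok p q f" "length xs = n"
    "\<And>\<phi>. (\<forall>v. \<phi> v \<in> carrier GG) \<Longrightarrow> (\<forall>f\<in>set E. eval_eq p q \<phi> f = gone) \<Longrightarrow> map \<phi> xs \<in> D"
    "\<And>d. d \<in> D \<Longrightarrow> \<exists>\<phi>. (\<forall>v. \<phi> v \<in> carrier GG) \<and> (\<forall>f\<in>set E. eval_eq p q \<phi> f = gone) \<and> map \<phi> xs = d"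
  shows "eq_definable p q n D"
proof -
  have "D = {map \<phi> xs |\<phi>. solves p q \<phi> E}"
    using assms(3,4) unfolding solves_def by blast
  then show ?thesis unfolding eq_definable_def using assms(1,2) by blast
qed

lemma ext_def:
  fixes F :: "nat equation list"
  assumes "eq_definable p q n E" "k < n" "l < n" "\<forall>f\<in>set F. consts_ok p q f"
  shows "eq_definable p q n {e \<in> E. \<exists>\<psi>. (\<forall>v. \<psi> v \<in> carrier GG) \<and> \<psi> 0 = e ! k \<and> \<psi> 1 = e ! l \<and>
                                   (\<forall>f\<in>set F. eval_eq p q \<psi> f = gone)}"
proof -
  obtain E0 :: "nat equation list" and xs where E0: "\<forall>e\<in>set E0. consts_ok p q e" "length xs = n"
    "E = {map \<phi> xs |\<phi>. solves p q \<phi> E0}"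
    using assms(1) unfolding eq_definable_def by blast
  define V where "V = insert 0 (set xs \<union> \<Union> (vars ` set E0))"
  have fV: "finite V" unfolding V_def using finite_vars by auto
  define N where "N = Suc (Max V)"
  have ltN: "\<And>v. v \<in> V \<Longrightarrow> v < N" unfolding N_def using fV by (simp add: le_imp_less_Suc)
  define ren where "ren j = (if j = 0 then xs ! k else if j = 1 then xs ! l else N + j)" for j
  define E' where "E' = E0 @ map (map (map_eqletter ren)) F"
  show ?thesis
  proof (rule defI[of E' xs])
    show "\<forall>f\<in>set E'. consts_ok p q f" using E0(1) assms(4) by (auto simp: E'_def consts_ok_rename)
    show "length xs = n" by fact
  next
    fix \<phi> assume c: "\<forall>v. \<phi> v \<in> carrier GG" and s: "\<forall>f\<in>set E'. eval_eq p q \<phi> f = gone"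
    have "map \<phi> xs \<in> E" using E0(3) c s by (auto simp: solves_def E'_def)
    moreover have "(\<phi> \<circ> ren) 0 = map \<phi> xs ! k" "(\<phi> \<circ> ren) 1 = map \<phi> xs ! l"
      using assms(2,3) E0(2) by (simp_all add: ren_def)
    moreover have "\<forall>f\<in>set F. eval_eq p q (\<phi> \<circ> ren) f = gone"
      using s by (auto simp: E'_def eval_rename[symmetric])
    moreover have "\<forall>v. (\<phi> \<circ> ren) v \<in> carrier GG" using c by simp
    ultimately show "map \<phi> xs \<in> {e \<in> E. \<exists>\<psi>. (\<forall>v. \<psi> v \<in> carrier GG) \<and> \<psi> 0 = e ! k \<and> \<psi> 1 = e ! l \<and>
                                   (\<forall>f\<in>set F. eval_eq p q \<psi> f = gone)}" by blast
  next
    fix d assume "d \<in> {e \<in> E. \<exists>\<psi>. (\<forall>v. \<psi> v \<in> carrier GG) \<and> \<psi> 0 = e ! k \<and> \<psi> 1 = e ! l \<and>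
                                   (\<forall>f\<in>set F. eval_eq p q \<psi> f = gone)}"
    then obtain \<phi> \<psi> where d: "d = map \<phi> xs" "solves p q \<phi> E0" and
      psi: "\<forall>v. \<psi> v \<in> carrier GG" "\<psi> 0 = d ! k" "\<psi> 1 = d ! l" "\<forall>f\<in>set F. eval_eq p q \<psi> f = gone"
      using E0(3) by blast
    define \<phi>' where "\<phi>' j = (if j < N then \<phi> j else \<psi> (j - N))" for j
    have c: "\<forall>v. \<phi>' v \<in> carrier GG" using d(2) psi(1) by (simp add: \<phi>'_def solves_def)
    have xsN: "\<And>v. v \<in> set xs \<Longrightarrow> v < N" using ltN by (simp add: V_def)
    have m: "map \<phi>' xs = d" using d(1) xsN by (simp add: \<phi>'_def)
    have "\<phi>' \<circ> ren = \<psi>"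
    proof
      fix j
      show "(\<phi>' \<circ> ren) j = \<psi> j"
      proof (cases "j = 0 \<or> j = 1")
        case True
        have "xs ! k \<in> set xs" "xs ! l \<in> set xs" using assms(2,3) E0(2) by simp_all
        then show ?thesis using True xsN psi(2,3) d(1) assms(2,3) E0(2)
          by (auto simp: ren_def \<phi>'_def)
      next
        case False
        then show ?thesis by (simp add: ren_def \<phi>'_def)
      qed
    qed
    then have sF: "\<forall>f\<in>set F. eval_eq p q \<phi>' (map (map_eqletter ren) f) = gone"
      using psi(4) by (simp add: eval_rename)
    have sE0: "\<forall>f\<in>set E0. eval_eq p q \<phi>' f = gone"
    proof
      fix f assume f: "f \<in> set E0"
      have "\<forall>v\<in>vars f. \<phi>' v = \<phi> v" using f ltN by (auto simp: V_def \<phi>'_def)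
      then have "eval_eq p q \<phi>' f = eval_eq p q \<phi> f" by (rule eval_cong)
      then show "eval_eq p q \<phi>' f = gone" using d(2) f by (simp add: solves_def)
    qed
    show "\<exists>\<phi>. (\<forall>v. \<phi> v \<in> carrier GG) \<and> (\<forall>f\<in>set E'. eval_eq p q \<phi> f = gone) \<and> map \<phi> xs = d"
      using c sF sE0 m by (intro exI[of _ \<phi>']) (auto simp: E'_def)
  qed
qed

definition commE :: "word set \<Rightarrow> nat \<Rightarrow> nat equation" where
  "commE h v = eqn p q [Var v, Cst h] [Cst h, Var v]"

definition testE :: "gen \<Rightarrow> nat \<Rightarrow> nat equation" where
  "testE Y v = eqn p q [Cst (gZ Y), Var v, Cst aa, InvVar v, Cst (ginv (gZ Y))]
                       [Var v, Cst (aa [^]\<^bsub>GG\<^esub> (ee p q Y)), InvVar v]"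

definition monE :: "gen \<Rightarrow> gen \<Rightarrow> nat \<Rightarrow> nat \<Rightarrow> nat equation list" where
  "monE X Y i v = [commE (hh X Y i) v, testE Y v]"

definition conjE :: "nat \<Rightarrow> nat \<Rightarrow> nat \<Rightarrow> nat \<Rightarrow> nat equation" where
  "conjE u x w y = eqn p q [Var u, Var x, Cst aa, InvVar x, InvVar u] [Var w, Var y, Cst aa, InvVar y, InvVar w]"

definition comm2E :: "nat \<Rightarrow> nat \<Rightarrow> nat equation" where
  "comm2E g y = eqn p q [Var g, Cst (gZ S), Var y] [Cst (gZ S), Var y, Var g]"

lemma ok_commE: "h \<in> carrier GG \<Longrightarrow> consts_ok p q (commE h v)"
  by (simp add: commE_def)
lemma ok_testE: "consts_ok p q (testE Y v)"
  by (simp add: testE_def)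
lemma ok_monE: "\<forall>f\<in>set (monE X Y i v). consts_ok p q f"
  by (simp add: monE_def ok_commE ok_testE)
lemma ok_conjE: "consts_ok p q (conjE u x w y)"
  by (simp add: conjE_def)
lemma ok_comm2E: "consts_ok p q (comm2E g y)"
  by (simp add: comm2E_def)

lemma sem_commE:
  assumes "\<forall>v. \<phi> v \<in> carrier GG" "h \<in> carrier GG"
  shows "eval_eq p q \<phi> (commE h v) = gone \<longleftrightarrow> \<phi> v \<cdot> h = h \<cdot> \<phi> v"
  unfolding commE_def using assms by (subst eqn_iff) (simp_all add: G.m_assoc)

lemma sem_testE:
  assumes "\<forall>v. \<phi> v \<in> carrier GG"
  shows "eval_eq p q \<phi> (testE Y v) = gone \<longleftrightarrow> test Y (\<phi> v)"
  unfolding testE_def test_def using assms by (subst eqn_iff) (simp_all add: G.m_assoc)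

lemma sem_monE:
  assumes "\<forall>v. \<phi> v \<in> carrier GG" "X \<noteq> A" "Y \<noteq> A" "X \<noteq> Y"
  shows "(\<forall>f\<in>set (monE X Y i v). eval_eq p q \<phi> f = gone) \<longleftrightarrow> (\<exists>n::nat. \<phi> v = hh X Y i [^]\<^bsub>GG\<^esub> n)"
  using mon_hh[OF assms(2-4), of "\<phi> v" i] assms(1)
  by (simp add: monE_def sem_commE sem_testE)

lemma sem_conjE:
  assumes "\<forall>v. \<phi> v \<in> carrier GG"
  shows "eval_eq p q \<phi> (conjE u x w y) = gone \<longleftrightarrow>
    \<phi> u \<cdot> (\<phi> x \<cdot> aa \<cdot> ginv (\<phi> x)) \<cdot> ginv (\<phi> u) = \<phi> w \<cdot> (\<phi> y \<cdot> aa \<cdot> ginv (\<phi> y)) \<cdot> ginv (\<phi> w)"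
  unfolding conjE_def using assms by (subst eqn_iff) (simp_all add: G.m_assoc)

lemma sem_comm2E:
  assumes "\<forall>v. \<phi> v \<in> carrier GG"
  shows "eval_eq p q \<phi> (comm2E g y) = gone \<longleftrightarrow> \<phi> g \<cdot> (gZ S \<cdot> \<phi> y) = (gZ S \<cdot> \<phi> y) \<cdot> \<phi> g"
  unfolding comm2E_def using assms by (subst eqn_iff) (simp_all add: G.m_assoc)

end


context primes2
begin

lemma hhT0: "hh T S 0 = gZ T" by (simp add: hh_def)
lemma hhS0: "hh S T 0 = gZ S" by (simp add: hh_def)

lemma part_mon1:
  assumes "X \<noteq> A" "Y \<noteq> A" "X \<noteq> Y"
  shows "eq_definable p q 1 {[g] | g. g \<in> mon_gen GG {hh X Y 0}}"
proof (rule defI[of "monE X Y 0 0" "[0]"])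
  show "\<forall>f\<in>set (monE X Y 0 0). consts_ok p q f" by (rule ok_monE)
  show "length [0::nat] = 1" by simp
next
  fix \<phi> assume c: "\<forall>v. \<phi> v \<in> carrier GG" and s: "\<forall>f\<in>set (monE X Y 0 0). eval_eq p q \<phi> f = gone"
  then obtain n :: nat where "\<phi> 0 = hh X Y 0 [^]\<^bsub>GG\<^esub> n" using sem_monE[OF c assms] by blast
  then show "map \<phi> [0] \<in> {[g] | g. g \<in> mon_gen GG {hh X Y 0}}"
    by (auto simp: mon_gen_hh)
next
  fix d assume "d \<in> {[g] | g. g \<in> mon_gen GG {hh X Y 0}}"
  then obtain n :: nat where d: "d = [hh X Y 0 [^]\<^bsub>GG\<^esub> n]" by (auto simp: mon_gen_hh)
  let ?\<phi> = "\<lambda>v::nat. hh X Y 0 [^]\<^bsub>GG\<^esub> n"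
  have c: "\<forall>v. ?\<phi> v \<in> carrier GG" by simp
  show "\<exists>\<phi>. (\<forall>v. \<phi> v \<in> carrier GG) \<and> (\<forall>f\<in>set (monE X Y 0 0). eval_eq p q \<phi> f = gone) \<and> map \<phi> [0] = d"
    using sem_monE[OF c assms, of 0 0] d by (intro exI[of _ ?\<phi>]) auto
qed

lemma part_mon2:
  "eq_definable p q 2 {[g, gZ T [^]\<^bsub>GG\<^esub> i] | g (i :: nat). g \<in> mon_gen GG {gZ S \<cdot> (gZ T [^]\<^bsub>GG\<^esub> i)}}"
proof (rule defI[of "monE T S 0 1 @ [comm2E 0 1, testE T 0]" "[0, 1]"])
  show "\<forall>f\<in>set (monE T S 0 1 @ [comm2E 0 1, testE T 0]). consts_ok p q f"
    using ok_monE ok_comm2E ok_testE by auto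
  show "length [0::nat, 1] = 2" by simp
next
  fix \<phi> assume c: "\<forall>v. \<phi> v \<in> carrier GG"
    and s: "\<forall>f\<in>set (monE T S 0 1 @ [comm2E 0 1, testE T 0]). eval_eq p q \<phi> f = gone"
  obtain i :: nat where i: "\<phi> 1 = gZ T [^]\<^bsub>GG\<^esub> i"
    using sem_monE[OF c, of T S 0 1] s by (auto simp: hhT0)
  have "\<phi> 0 \<cdot> hh S T i = hh S T i \<cdot> \<phi> 0" "test T (\<phi> 0)"
    using s sem_comm2E[OF c, of 0 1] sem_testE[OF c, of T 0] i by (auto simp: hh_def)
  then obtain n :: nat where "\<phi> 0 = hh S T i [^]\<^bsub>GG\<^esub> n"
    using mon_hh[of S T "\<phi> 0" i] c by auto
  moreover have "hh S T i [^]\<^bsub>GG\<^esub> n \<in> mon_gen GG {gZ S \<cdot> (gZ T [^]\<^bsub>GG\<^esub> i)}"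
    using mon_gen_hh[of S T i] by (auto simp: hh_def)
  ultimately show "map \<phi> [0, 1] \<in> {[g, gZ T [^]\<^bsub>GG\<^esub> i] | g (i :: nat). g \<in> mon_gen GG {gZ S \<cdot> (gZ T [^]\<^bsub>GG\<^esub> i)}}"
    using i by auto
next
  fix d assume "d \<in> {[g, gZ T [^]\<^bsub>GG\<^esub> i] | g (i :: nat). g \<in> mon_gen GG {gZ S \<cdot> (gZ T [^]\<^bsub>GG\<^esub> i)}}"
  then obtain n i :: nat where d: "d = [hh S T i [^]\<^bsub>GG\<^esub> n, gZ T [^]\<^bsub>GG\<^esub> i]"
    by (auto simp: mon_gen_hh[of S T, unfolded hh_def] hh_def)
  define \<phi> where "\<phi> v = (if v = 0 then hh S T i [^]\<^bsub>GG\<^esub> n else gZ T [^]\<^bsub>GG\<^esub> i)" for v :: nat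
  have c: "\<forall>v. \<phi> v \<in> carrier GG" by (simp add: \<phi>_def)
  have p0: "\<phi> 0 = hh S T i [^]\<^bsub>GG\<^esub> n" by (simp add: \<phi>_def)
  have p1: "\<phi> 1 = gZ T [^]\<^bsub>GG\<^esub> i" by (simp add: \<phi>_def)
  have e1: "\<forall>f\<in>set (monE T S 0 1). eval_eq p q \<phi> f = gone"
    using sem_monE[OF c, of T S 0 1] p1 unfolding hhT0 by blast
  have e2: "eval_eq p q \<phi> (comm2E 0 1) = gone"
  proof -
    have "hh S T i [^]\<^bsub>GG\<^esub> n \<cdot> hh S T i = hh S T i \<cdot> hh S T i [^]\<^bsub>GG\<^esub> n"
      by (metis G.nat_pow_Suc G.nat_pow_Suc2 hh_carr)
    then show ?thesis using sem_comm2E[OF c, of 0 1] unfolding p0 p1 by (simp add: hh_def)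
  qed
  have e3: "eval_eq p q \<phi> (testE T 0) = gone"
    using sem_testE[OF c, of T 0] test_pos[of S T i n] unfolding p0 by simp
  show "\<exists>\<phi>. (\<forall>v. \<phi> v \<in> carrier GG) \<and> (\<forall>f\<in>set (monE T S 0 1 @ [comm2E 0 1, testE T 0]). eval_eq p q \<phi> f = gone) \<and> map \<phi> [0, 1] = d"
    using c e1 e2 e3 d p0 p1 by (intro exI[of _ \<phi>]) (auto simp: hh_def)
qed

end


context primes2
begin

lemma conj_C:
  assumes "Z \<noteq> A" "x \<cdot> aa \<cdot> ginv x = aa [^]\<^bsub>GG\<^esub> P"
  shows "gZ Z [^]\<^bsub>GG\<^esub> (j::nat) \<cdot> (x \<cdot> aa \<cdot> ginv x) \<cdot> ginv (gZ Z [^]\<^bsub>GG\<^esub> j) = aa [^]\<^bsub>GG\<^esub> (ee p q Z ^ j * P)"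
  unfolding assms(2) by (rule conjY_pow[OF assms(1)])

lemma eeS: "ee p q S = int p" and eeT: "ee p q T = int q"
  by (simp_all add: ee_def)

definition F4 :: "nat equation list" where
  "F4 = monE T S 0 2 @ monE T S 0 3 @ [conjE 2 0 3 1]"

definition F5 :: "nat equation list" where
  "F5 = monE S T 0 2 @ monE S T 0 3 @ [conjE 2 0 3 1]"

definition F3 :: "nat equation list" where
  "F3 = monE S T 1 2 @ monE T S 0 3 @ monE T S 0 4 @ monE S T 0 5 @ monE S T 0 6 @
        [conjE 3 0 4 2, conjE 5 2 6 1]"

lemma ok_F4: "\<forall>f\<in>set F4. consts_ok p q f" using ok_monE ok_conjE by (auto simp: F4_def)
lemma ok_F5: "\<forall>f\<in>set F5. consts_ok p q f" using ok_monE ok_conjE by (auto simp: F5_def)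
lemma ok_F3: "\<forall>f\<in>set F3. consts_ok p q f" using ok_monE ok_conjE by (auto simp: F3_def)

lemma monT_pow: "(\<exists>n::nat. x = hh T S 0 [^]\<^bsub>GG\<^esub> n) \<longleftrightarrow> (\<exists>n::nat. x = gZ T [^]\<^bsub>GG\<^esub> n)"
  by (simp add: hhT0)
lemma monS_pow: "(\<exists>n::nat. x = hh S T 0 [^]\<^bsub>GG\<^esub> n) \<longleftrightarrow> (\<exists>n::nat. x = gZ S [^]\<^bsub>GG\<^esub> n)"
  by (simp add: hhS0)

lemma part4:
  assumes pr: "prime p" "prime q" "p \<noteq> q"
    and ek: "ek \<in> mon_gen GG {gZ S, gZ T}" and el: "el \<in> mon_gen GG {gZ S, gZ T}"
  shows "(\<exists>\<psi>. (\<forall>v. \<psi> v \<in> carrier GG) \<and> \<psi> 0 = ek \<and> \<psi> 1 = el \<and> (\<forall>f\<in>set F4. eval_eq p q \<psi> f = gone))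
         \<longleftrightarrow> expsum S ek = expsum S el"
proof -
  obtain m1 n1 :: nat where k: "expsum S ek = int m1" "expsum T ek = int n1"
    "ek \<cdot> aa \<cdot> ginv ek = aa [^]\<^bsub>GG\<^esub> (ee p q S ^ m1 * ee p q T ^ n1)" using mon_st[OF ek] by blast
  obtain m2 n2 :: nat where l: "expsum S el = int m2" "expsum T el = int n2"
    "el \<cdot> aa \<cdot> ginv el = aa [^]\<^bsub>GG\<^esub> (ee p q S ^ m2 * ee p q T ^ n2)" using mon_st[OF el] by blast
  have TA: "T \<noteq> A" by simp
  have ekc: "ek \<in> carrier GG" and elc: "el \<in> carrier GG"
    using ek el mon_gen_carr[where X="{gZ S, gZ T}"] by auto
  show ?thesis
  proof
    assume "\<exists>\<psi>. (\<forall>v. \<psi> v \<in> carrier GG) \<and> \<psi> 0 = ek \<and> \<psi> 1 = el \<and> (\<forall>f\<in>set F4. eval_eq p q \<psi> f = gone)"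
    then obtain \<psi> where c: "\<forall>v. \<psi> v \<in> carrier GG" and \<psi>: "\<psi> 0 = ek" "\<psi> 1 = el"
      "\<forall>f\<in>set F4. eval_eq p q \<psi> f = gone" by blast
    obtain j :: nat where j: "\<psi> 2 = gZ T [^]\<^bsub>GG\<^esub> j"
      using sem_monE[OF c, of T S 0 2] \<psi>(3) monT_pow by (auto simp: F4_def)
    obtain j' :: nat where j': "\<psi> 3 = gZ T [^]\<^bsub>GG\<^esub> j'"
      using sem_monE[OF c, of T S 0 3] \<psi>(3) monT_pow by (auto simp: F4_def)
    have "\<psi> 2 \<cdot> (\<psi> 0 \<cdot> aa \<cdot> ginv (\<psi> 0)) \<cdot> ginv (\<psi> 2) = \<psi> 3 \<cdot> (\<psi> 1 \<cdot> aa \<cdot> ginv (\<psi> 1)) \<cdot> ginv (\<psi> 3)"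
      using sem_conjE[OF c, of 2 0 3 1] \<psi>(3) by (auto simp: F4_def)
    then have "aa [^]\<^bsub>GG\<^esub> (ee p q T ^ j * (ee p q S ^ m1 * ee p q T ^ n1))
             = aa [^]\<^bsub>GG\<^esub> (ee p q T ^ j' * (ee p q S ^ m2 * ee p q T ^ n2))"
      unfolding j j' \<psi>(1,2) conj_C[OF TA k(3)] conj_C[OF TA l(3)] by simp
    then have "int p ^ m1 * int q ^ (j + n1) = int p ^ m2 * int q ^ (j' + n2)"
      by (auto dest!: aa_pow_inj simp: eeS eeT power_add mult_ac)
    then have "m1 = m2" using pq_unique(1)[OF pr] by blast
    then show "expsum S ek = expsum S el" using k l by simp
  next
    assume "expsum S ek = expsum S el"
    then have m: "m1 = m2" using k l by simp
    define \<psi> where "\<psi> v = (if v = 0 then ek else if v = 1 then el else if v = 2 then gZ T [^]\<^bsub>GG\<^esub> n2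
        else if v = 3 then gZ T [^]\<^bsub>GG\<^esub> n1 else gone)" for v :: nat
    have c: "\<forall>v. \<psi> v \<in> carrier GG" using ekc elc by (simp add: \<psi>_def)
    have p0: "\<psi> 0 = ek" "\<psi> 1 = el" "\<psi> 2 = gZ T [^]\<^bsub>GG\<^esub> n2" "\<psi> 3 = gZ T [^]\<^bsub>GG\<^esub> n1"
      by (simp_all add: \<psi>_def)
    have e1: "\<forall>f\<in>set (monE T S 0 2). eval_eq p q \<psi> f = gone"
      using sem_monE[OF c, of T S 0 2] p0(3) monT_pow by blast
    have e2: "\<forall>f\<in>set (monE T S 0 3). eval_eq p q \<psi> f = gone"
      using sem_monE[OF c, of T S 0 3] p0(4) monT_pow by blast
    have "\<psi> 2 \<cdot> (\<psi> 0 \<cdot> aa \<cdot> ginv (\<psi> 0)) \<cdot> ginv (\<psi> 2) = \<psi> 3 \<cdot> (\<psi> 1 \<cdot> aa \<cdot> ginv (\<psi> 1)) \<cdot> ginv (\<psi> 3)"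
      unfolding p0 conj_C[OF TA k(3)] conj_C[OF TA l(3)] using m by (simp add: mult_ac)
    then have e3: "eval_eq p q \<psi> (conjE 2 0 3 1) = gone" using sem_conjE[OF c] by simp
    show "\<exists>\<psi>. (\<forall>v. \<psi> v \<in> carrier GG) \<and> \<psi> 0 = ek \<and> \<psi> 1 = el \<and> (\<forall>f\<in>set F4. eval_eq p q \<psi> f = gone)"
      using c p0 e1 e2 e3 by (intro exI[of _ \<psi>]) (auto simp: F4_def)
  qed
qed

lemma part5:
  assumes pr: "prime p" "prime q" "p \<noteq> q"
    and ek: "ek \<in> mon_gen GG {gZ S, gZ T}" and el: "el \<in> mon_gen GG {gZ S, gZ T}"
  shows "(\<exists>\<psi>. (\<forall>v. \<psi> v \<in> carrier GG) \<and> \<psi> 0 = ek \<and> \<psi> 1 = el \<and> (\<forall>f\<in>set F5. eval_eq p q \<psi> f = gone))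
         \<longleftrightarrow> expsum T ek = expsum T el"
proof -
  obtain m1 n1 :: nat where k: "expsum S ek = int m1" "expsum T ek = int n1"
    "ek \<cdot> aa \<cdot> ginv ek = aa [^]\<^bsub>GG\<^esub> (ee p q S ^ m1 * ee p q T ^ n1)" using mon_st[OF ek] by blast
  obtain m2 n2 :: nat where l: "expsum S el = int m2" "expsum T el = int n2"
    "el \<cdot> aa \<cdot> ginv el = aa [^]\<^bsub>GG\<^esub> (ee p q S ^ m2 * ee p q T ^ n2)" using mon_st[OF el] by blast
  have SA: "S \<noteq> A" by simp
  have ekc: "ek \<in> carrier GG" and elc: "el \<in> carrier GG"
    using ek el mon_gen_carr[where X="{gZ S, gZ T}"] by auto
  show ?thesis
  proof
    assume "\<exists>\<psi>. (\<forall>v. \<psi> v \<in> carrier GG) \<and> \<psi> 0 = ek \<and> \<psi> 1 = el \<and> (\<forall>f\<in>set F5. eval_eq p q \<psi> f = gone)"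
    then obtain \<psi> where c: "\<forall>v. \<psi> v \<in> carrier GG" and \<psi>: "\<psi> 0 = ek" "\<psi> 1 = el"
      "\<forall>f\<in>set F5. eval_eq p q \<psi> f = gone" by blast
    obtain j :: nat where j: "\<psi> 2 = gZ S [^]\<^bsub>GG\<^esub> j"
      using sem_monE[OF c, of S T 0 2] \<psi>(3) monS_pow by (auto simp: F5_def)
    obtain j' :: nat where j': "\<psi> 3 = gZ S [^]\<^bsub>GG\<^esub> j'"
      using sem_monE[OF c, of S T 0 3] \<psi>(3) monS_pow by (auto simp: F5_def)
    have "\<psi> 2 \<cdot> (\<psi> 0 \<cdot> aa \<cdot> ginv (\<psi> 0)) \<cdot> ginv (\<psi> 2) = \<psi> 3 \<cdot> (\<psi> 1 \<cdot> aa \<cdot> ginv (\<psi> 1)) \<cdot> ginv (\<psi> 3)"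
      using sem_conjE[OF c, of 2 0 3 1] \<psi>(3) by (auto simp: F5_def)
    then have "aa [^]\<^bsub>GG\<^esub> (ee p q S ^ j * (ee p q S ^ m1 * ee p q T ^ n1))
             = aa [^]\<^bsub>GG\<^esub> (ee p q S ^ j' * (ee p q S ^ m2 * ee p q T ^ n2))"
      unfolding j j' \<psi>(1,2) conj_C[OF SA k(3)] conj_C[OF SA l(3)] by simp
    then have "int p ^ (j + m1) * int q ^ n1 = int p ^ (j' + m2) * int q ^ n2"
      by (auto dest!: aa_pow_inj simp: eeS eeT power_add mult_ac)
    then have "n1 = n2" using pq_unique(2)[OF pr] by blast
    then show "expsum T ek = expsum T el" using k l by simp
  next
    assume "expsum T ek = expsum T el"
    then have m: "n1 = n2" using k l by simp
    define \<psi> where "\<psi> v = (if v = 0 then ek else if v = 1 then el else if v = 2 then gZ S [^]\<^bsub>GG\<^esub> m2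
        else if v = 3 then gZ S [^]\<^bsub>GG\<^esub> m1 else gone)" for v :: nat
    have c: "\<forall>v. \<psi> v \<in> carrier GG" using ekc elc by (simp add: \<psi>_def)
    have p0: "\<psi> 0 = ek" "\<psi> 1 = el" "\<psi> 2 = gZ S [^]\<^bsub>GG\<^esub> m2" "\<psi> 3 = gZ S [^]\<^bsub>GG\<^esub> m1"
      by (simp_all add: \<psi>_def)
    have e1: "\<forall>f\<in>set (monE S T 0 2). eval_eq p q \<psi> f = gone"
      using sem_monE[OF c, of S T 0 2] p0(3) monS_pow by blast
    have e2: "\<forall>f\<in>set (monE S T 0 3). eval_eq p q \<psi> f = gone"
      using sem_monE[OF c, of S T 0 3] p0(4) monS_pow by blast
    have "\<psi> 2 \<cdot> (\<psi> 0 \<cdot> aa \<cdot> ginv (\<psi> 0)) \<cdot> ginv (\<psi> 2) = \<psi> 3 \<cdot> (\<psi> 1 \<cdot> aa \<cdot> ginv (\<psi> 1)) \<cdot> ginv (\<psi> 3)"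
      unfolding p0 conj_C[OF SA k(3)] conj_C[OF SA l(3)] using m by (simp add: mult_ac)
    then have e3: "eval_eq p q \<psi> (conjE 2 0 3 1) = gone" using sem_conjE[OF c] by simp
    show "\<exists>\<psi>. (\<forall>v. \<psi> v \<in> carrier GG) \<and> \<psi> 0 = ek \<and> \<psi> 1 = el \<and> (\<forall>f\<in>set F5. eval_eq p q \<psi> f = gone)"
      using c p0 e1 e2 e3 by (intro exI[of _ \<psi>]) (auto simp: F5_def)
  qed
qed

lemma part3:
  assumes pr: "prime p" "prime q" "p \<noteq> q"
    and ek: "ek \<in> mon_gen GG {gZ S, gZ T}" and el: "el \<in> mon_gen GG {gZ S, gZ T}"
  shows "(\<exists>\<psi>. (\<forall>v. \<psi> v \<in> carrier GG) \<and> \<psi> 0 = ek \<and> \<psi> 1 = el \<and> (\<forall>f\<in>set F3. eval_eq p q \<psi> f = gone))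
         \<longleftrightarrow> expsum S ek = expsum T el"
proof -
  obtain m1 n1 :: nat where k: "expsum S ek = int m1" "expsum T ek = int n1"
    "ek \<cdot> aa \<cdot> ginv ek = aa [^]\<^bsub>GG\<^esub> (ee p q S ^ m1 * ee p q T ^ n1)" using mon_st[OF ek] by blast
  obtain m2 n2 :: nat where l: "expsum S el = int m2" "expsum T el = int n2"
    "el \<cdot> aa \<cdot> ginv el = aa [^]\<^bsub>GG\<^esub> (ee p q S ^ m2 * ee p q T ^ n2)" using mon_st[OF el] by blast
  have SA: "S \<noteq> A" and TA: "T \<noteq> A" by simp_all
  have ekc: "ek \<in> carrier GG" and elc: "el \<in> carrier GG"
    using ek el mon_gen_carr[where X="{gZ S, gZ T}"] by auto
  have cw: "\<And>n. hh S T 1 [^]\<^bsub>GG\<^esub> (n::nat) \<cdot> aa \<cdot> ginv (hh S T 1 [^]\<^bsub>GG\<^esub> n)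
      = aa [^]\<^bsub>GG\<^esub> (ee p q S ^ n * ee p q T ^ n)"
    using conj_hh_pow[OF SA TA, of 1] by (simp add: power_mult_distrib)
  show ?thesis
  proof
    assume "\<exists>\<psi>. (\<forall>v. \<psi> v \<in> carrier GG) \<and> \<psi> 0 = ek \<and> \<psi> 1 = el \<and> (\<forall>f\<in>set F3. eval_eq p q \<psi> f = gone)"
    then obtain \<psi> where c: "\<forall>v. \<psi> v \<in> carrier GG" and \<psi>: "\<psi> 0 = ek" "\<psi> 1 = el"
      "\<forall>f\<in>set F3. eval_eq p q \<psi> f = gone" by blast
    obtain n :: nat where w: "\<psi> 2 = hh S T 1 [^]\<^bsub>GG\<^esub> n"
      using sem_monE[OF c, of S T 1 2] \<psi>(3) by (auto simp: F3_def)
    obtain a :: nat where a: "\<psi> 3 = gZ T [^]\<^bsub>GG\<^esub> a"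
      using sem_monE[OF c, of T S 0 3] \<psi>(3) monT_pow by (auto simp: F3_def)
    obtain b :: nat where b: "\<psi> 4 = gZ T [^]\<^bsub>GG\<^esub> b"
      using sem_monE[OF c, of T S 0 4] \<psi>(3) monT_pow by (auto simp: F3_def)
    obtain c' :: nat where c': "\<psi> 5 = gZ S [^]\<^bsub>GG\<^esub> c'"
      using sem_monE[OF c, of S T 0 5] \<psi>(3) monS_pow by (auto simp: F3_def)
    obtain d :: nat where d: "\<psi> 6 = gZ S [^]\<^bsub>GG\<^esub> d"
      using sem_monE[OF c, of S T 0 6] \<psi>(3) monS_pow by (auto simp: F3_def)
    have "\<psi> 3 \<cdot> (\<psi> 0 \<cdot> aa \<cdot> ginv (\<psi> 0)) \<cdot> ginv (\<psi> 3) = \<psi> 4 \<cdot> (\<psi> 2 \<cdot> aa \<cdot> ginv (\<psi> 2)) \<cdot> ginv (\<psi> 4)"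
      using sem_conjE[OF c, of 3 0 4 2] \<psi>(3) by (auto simp: F3_def)
    then have "aa [^]\<^bsub>GG\<^esub> (ee p q T ^ a * (ee p q S ^ m1 * ee p q T ^ n1))
             = aa [^]\<^bsub>GG\<^esub> (ee p q T ^ b * (ee p q S ^ n * ee p q T ^ n))"
      unfolding a b w \<psi>(1) conj_C[OF TA k(3)] conj_C[OF TA cw] by simp
    then have "int p ^ m1 * int q ^ (a + n1) = int p ^ n * int q ^ (b + n)"
      by (auto dest!: aa_pow_inj simp: eeS eeT power_add mult_ac)
    then have 1: "m1 = n" using pq_unique(1)[OF pr] by blast
    have "\<psi> 5 \<cdot> (\<psi> 2 \<cdot> aa \<cdot> ginv (\<psi> 2)) \<cdot> ginv (\<psi> 5) = \<psi> 6 \<cdot> (\<psi> 1 \<cdot> aa \<cdot> ginv (\<psi> 1)) \<cdot> ginv (\<psi> 6)"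
      using sem_conjE[OF c, of 5 2 6 1] \<psi>(3) by (auto simp: F3_def)
    then have "aa [^]\<^bsub>GG\<^esub> (ee p q S ^ c' * (ee p q S ^ n * ee p q T ^ n))
             = aa [^]\<^bsub>GG\<^esub> (ee p q S ^ d * (ee p q S ^ m2 * ee p q T ^ n2))"
      unfolding c' d w \<psi>(2) conj_C[OF SA l(3)] conj_C[OF SA cw] by simp
    then have "int p ^ (c' + n) * int q ^ n = int p ^ (d + m2) * int q ^ n2"
      by (auto dest!: aa_pow_inj simp: eeS eeT power_add mult_ac)
    then have 2: "n = n2" using pq_unique(2)[OF pr] by blast
    show "expsum S ek = expsum T el" using k l 1 2 by simp
  next
    assume "expsum S ek = expsum T el"
    then have m: "m1 = n2" using k l by simp
    define \<psi> where "\<psi> v = (if v = 0 then ek else if v = 1 then el else if v = 2 then hh S T 1 [^]\<^bsub>GG\<^esub> m1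
        else if v = 3 then gZ T [^]\<^bsub>GG\<^esub> m1 else if v = 4 then gZ T [^]\<^bsub>GG\<^esub> n1
        else if v = 5 then gZ S [^]\<^bsub>GG\<^esub> m2 else if v = 6 then gZ S [^]\<^bsub>GG\<^esub> m1 else gone)" for v :: nat
    have c: "\<forall>v. \<psi> v \<in> carrier GG" using ekc elc by (simp add: \<psi>_def)
    have p0: "\<psi> 0 = ek" "\<psi> 1 = el" "\<psi> 2 = hh S T 1 [^]\<^bsub>GG\<^esub> m1"
      "\<psi> 3 = gZ T [^]\<^bsub>GG\<^esub> m1" "\<psi> 4 = gZ T [^]\<^bsub>GG\<^esub> n1"
      "\<psi> 5 = gZ S [^]\<^bsub>GG\<^esub> m2" "\<psi> 6 = gZ S [^]\<^bsub>GG\<^esub> m1"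
      by (simp_all add: \<psi>_def)
    have e2: "\<forall>f\<in>set (monE S T 1 2). eval_eq p q \<psi> f = gone"
      using sem_monE[OF c, of S T 1 2] p0(3) by blast
    have e3: "\<forall>f\<in>set (monE T S 0 3). eval_eq p q \<psi> f = gone"
      using sem_monE[OF c, of T S 0 3] p0(4) monT_pow by blast
    have e4: "\<forall>f\<in>set (monE T S 0 4). eval_eq p q \<psi> f = gone"
      using sem_monE[OF c, of T S 0 4] p0(5) monT_pow by blast
    have e5: "\<forall>f\<in>set (monE S T 0 5). eval_eq p q \<psi> f = gone"
      using sem_monE[OF c, of S T 0 5] p0(6) monS_pow by blast
    have e6: "\<forall>f\<in>set (monE S T 0 6). eval_eq p q \<psi> f = gone"
      using sem_monE[OF c, of S T 0 6] p0(7) monS_pow by blast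
    have "\<psi> 3 \<cdot> (\<psi> 0 \<cdot> aa \<cdot> ginv (\<psi> 0)) \<cdot> ginv (\<psi> 3) = \<psi> 4 \<cdot> (\<psi> 2 \<cdot> aa \<cdot> ginv (\<psi> 2)) \<cdot> ginv (\<psi> 4)"
      unfolding p0 conj_C[OF TA k(3)] conj_C[OF TA cw] by (simp add: mult_ac)
    then have e7: "eval_eq p q \<psi> (conjE 3 0 4 2) = gone" using sem_conjE[OF c] by simp
    have "\<psi> 5 \<cdot> (\<psi> 2 \<cdot> aa \<cdot> ginv (\<psi> 2)) \<cdot> ginv (\<psi> 5) = \<psi> 6 \<cdot> (\<psi> 1 \<cdot> aa \<cdot> ginv (\<psi> 1)) \<cdot> ginv (\<psi> 6)"
      unfolding p0 conj_C[OF SA l(3)] conj_C[OF SA cw] using m by (simp add: mult_ac)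
    then have e8: "eval_eq p q \<psi> (conjE 5 2 6 1) = gone" using sem_conjE[OF c] by simp
    show "\<exists>\<psi>. (\<forall>v. \<psi> v \<in> carrier GG) \<and> \<psi> 0 = ek \<and> \<psi> 1 = el \<and> (\<forall>f\<in>set F3. eval_eq p q \<psi> f = gone)"
      using c p0 e2 e3 e4 e5 e6 e7 e8 by (intro exI[of _ \<psi>]) (auto simp: F3_def)
  qed
qed

end


theorem lemma3p3:
  fixes p q :: nat
  assumes "prime p" and "prime q" and "p \<noteq> q"
  defines "G \<equiv> Gpres p q" and "s \<equiv> gs p q" and "t \<equiv> gt p q"
  shows "eq_definable p q 1 {[g] | g. g \<in> mon_gen G {s}} \<and>
         eq_definable p q 1 {[g] | g. g \<in> mon_gen G {t}} \<and>
         eq_definable p q 2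
           {[g, t [^]\<^bsub>G\<^esub> i] | g (i :: nat). g \<in> mon_gen G {s \<otimes>\<^bsub>G\<^esub> (t [^]\<^bsub>G\<^esub> i)}} \<and>
         (\<forall>n E k l. eq_definable p q n E \<longrightarrow> k < n \<longrightarrow> l < n \<longrightarrow> k \<noteq> l \<longrightarrow>
           (\<forall>e\<in>E. e ! k \<in> mon_gen G {s, t} \<and> e ! l \<in> mon_gen G {s, t}) \<longrightarrow>
           eq_definable p q n {e \<in> E. expsum S (e ! k) = expsum T (e ! l)} \<and>
           eq_definable p q n {e \<in> E. expsum S (e ! k) = expsum S (e ! l)} \<and>
           eq_definable p q n {e \<in> E. expsum T (e ! k) = expsum T (e ! l)})"
proof -
  have p2: "p \<ge> 2" using assms(1) by (simp add: prime_ge_2_nat)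
  have q2: "q \<ge> 2" using assms(2) by (simp add: prime_ge_2_nat)
  interpret primes2 p q using p2 q2 by unfold_locales
  have sd: "s = gZ S" by (simp add: s_def gs_def)
  have td: "t = gZ T" by (simp add: t_def gt_def)
  have P1: "eq_definable p q 1 {[g] | g. g \<in> mon_gen G {s}}"
    using part_mon1[of S T] by (simp add: G_def sd hhS0)
  have P2: "eq_definable p q 1 {[g] | g. g \<in> mon_gen G {t}}"
    using part_mon1[of T S] by (simp add: G_def td hhT0)
  have P3: "eq_definable p q 2
           {[g, t [^]\<^bsub>G\<^esub> i] | g (i :: nat). g \<in> mon_gen G {s \<otimes>\<^bsub>G\<^esub> (t [^]\<^bsub>G\<^esub> i)}}"
    using part_mon2 by (simp add: G_def sd td)
  have P4: "\<forall>n E k l. eq_definable p q n E \<longrightarrow> k < n \<longrightarrow> l < n \<longrightarrow> k \<noteq> l \<longrightarrow>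
           (\<forall>e\<in>E. e ! k \<in> mon_gen G {s, t} \<and> e ! l \<in> mon_gen G {s, t}) \<longrightarrow>
           eq_definable p q n {e \<in> E. expsum S (e ! k) = expsum T (e ! l)} \<and>
           eq_definable p q n {e \<in> E. expsum S (e ! k) = expsum S (e ! l)} \<and>
           eq_definable p q n {e \<in> E. expsum T (e ! k) = expsum T (e ! l)}"
  proof (intro allI impI)
    fix n E k l
    assume d: "eq_definable p q n E" and kl: "k < n" "l < n" "k \<noteq> l"
      and m: "\<forall>e\<in>E. e ! k \<in> mon_gen G {s, t} \<and> e ! l \<in> mon_gen G {s, t}"
    have m': "\<And>e. e \<in> E \<Longrightarrow> e ! k \<in> mon_gen GG {gZ S, gZ T} \<and> e ! l \<in> mon_gen GG {gZ S, gZ T}"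
      using m by (simp add: G_def sd td)
    have a3: "{e \<in> E. expsum S (e ! k) = expsum T (e ! l)} =
      {e \<in> E. \<exists>\<psi>. (\<forall>v. \<psi> v \<in> carrier GG) \<and> \<psi> 0 = e ! k \<and> \<psi> 1 = e ! l \<and> (\<forall>f\<in>set F3. eval_eq p q \<psi> f = gone)}"
      using part3[OF assms(1-3)] m' by blast
    have a4: "{e \<in> E. expsum S (e ! k) = expsum S (e ! l)} =
      {e \<in> E. \<exists>\<psi>. (\<forall>v. \<psi> v \<in> carrier GG) \<and> \<psi> 0 = e ! k \<and> \<psi> 1 = e ! l \<and> (\<forall>f\<in>set F4. eval_eq p q \<psi> f = gone)}"
      using part4[OF assms(1-3)] m' by blast
    have a5: "{e \<in> E. expsum T (e ! k) = expsum T (e ! l)} =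
      {e \<in> E. \<exists>\<psi>. (\<forall>v. \<psi> v \<in> carrier GG) \<and> \<psi> 0 = e ! k \<and> \<psi> 1 = e ! l \<and> (\<forall>f\<in>set F5. eval_eq p q \<psi> f = gone)}"
      using part5[OF assms(1-3)] m' by blast
    show "eq_definable p q n {e \<in> E. expsum S (e ! k) = expsum T (e ! l)} \<and>
          eq_definable p q n {e \<in> E. expsum S (e ! k) = expsum S (e ! l)} \<and>
          eq_definable p q n {e \<in> E. expsum T (e ! k) = expsum T (e ! l)}"
      unfolding a3 a4 a5 using ext_def[OF d kl(1,2) ok_F3] ext_def[OF d kl(1,2) ok_F4]
        ext_def[OF d kl(1,2) ok_F5] by blast
  qed
  show ?thesis using P1 P2 P3 P4 by blast
qed


end
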